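(* Let $K$ be a spherically complete non-Archimedean field with value group $|K^\times|=\mathbb{R}_{>0}$. Then every almost finite free $K^{\circ,a}$-module is isomorphic, in the category of almost $K^{\circ}$-modules, to a finite direct sum of copies of $K^{\circ,a}$.
   Context: A non-Archimedean field is a field complete for a nontrivial rank-one non-Archimedean absolute value; it is spherically complete if every decreasing sequence of closed balls has nonempty intersection. $K^\circ=\{x:|x|\le1\}$ and $K^{\circ\circ}=\{x:|x|<1\}$. Almost mathematics is relative to $(K^\circ,K^{\circ\circ})$: the category of almost $K^\circ$-modules is the Serre quotient of $K^\circ$-modules by the modules annihilated by $K^{\circ\circ}$, and $K^{\circ,a}$ is the image of $K^\circ$. An almost $K^{\circ,a}$-module $M$ is almost finite free of rank $r$ if for every finitely generated ideal $I_0\subseteq K^{\circ\circ}$ there is a morphism $(K^{\circ,a})^r\to M$ whose kernel and cokernel are annihilated by $I_0$. *)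

theory Defs
  imports Complex_Main "HOL-Algebra.Module" "HOL-Algebra.Ideal"
begin

definition nonarch_abs :: "('k::field \<Rightarrow> real) \<Rightarrow> bool" where
  "nonarch_abs v \<longleftrightarrow>
     (\<forall>x. v x \<ge> 0) \<and> (\<forall>x. v x = 0 \<longleftrightarrow> x = 0) \<and>
     (\<forall>x y. v (x * y) = v x * v y) \<and>
     (\<forall>x y. v (x + y) \<le> max (v x) (v y))"

definition nontrivial_abs :: "('k::field \<Rightarrow> real) \<Rightarrow> bool" where
  "nontrivial_abs v \<longleftrightarrow> (\<exists>x. x \<noteq> 0 \<and> v x \<noteq> 1)"

definition complete_abs :: "('k::field \<Rightarrow> real) \<Rightarrow> bool" where
  "complete_abs v \<longleftrightarrow>
     (\<forall>s :: nat \<Rightarrow> 'k.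
        (\<forall>e>0. \<exists>N. \<forall>m\<ge>N. \<forall>n\<ge>N. v (s m - s n) < e) \<longrightarrow>
        (\<exists>l. \<forall>e>0. \<exists>N. \<forall>n\<ge>N. v (s n - l) < e))"

definition nonarch_field :: "('k::field \<Rightarrow> real) \<Rightarrow> bool" where
  "nonarch_field v \<longleftrightarrow> nonarch_abs v \<and> nontrivial_abs v \<and> complete_abs v"

definition cball_v :: "('k::field \<Rightarrow> real) \<Rightarrow> 'k \<Rightarrow> real \<Rightarrow> 'k set" where
  "cball_v v c r = {x. v (x - c) \<le> r}"

definition spherically_complete :: "('k::field \<Rightarrow> real) \<Rightarrow> bool" where
  "spherically_complete v \<longleftrightarrow>
     (\<forall>(c :: nat \<Rightarrow> 'k) (r :: nat \<Rightarrow> real).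
        (\<forall>n. r n > 0) \<longrightarrow>
        (\<forall>n. cball_v v (c (Suc n)) (r (Suc n)) \<subseteq> cball_v v (c n) (r n)) \<longrightarrow>
        (\<Inter>n. cball_v v (c n) (r n)) \<noteq> {})"

definition value_group :: "('k::field \<Rightarrow> real) \<Rightarrow> real set" where
  "value_group v = v ` (UNIV - {0})"

definition Kint :: "('k::field \<Rightarrow> real) \<Rightarrow> 'k ring" where
  "Kint v = \<lparr>carrier = {x. v x \<le> 1}, mult = (*), one = 1, zero = 0, add = (+)\<rparr>"

definition Kmax :: "('k::field \<Rightarrow> real) \<Rightarrow> 'k set" where
  "Kmax v = {x. v x < 1}"

text \<open>The free K^o-module (K^o)^r, realised as functions nat => 'k
  with values in K^o, vanishing from index r on.\<close>
definition Kfree :: "('k::field \<Rightarrow> real) \<Rightarrow> nat \<Rightarrow> ('k, nat \<Rightarrow> 'k) module" where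
  "Kfree v r = \<lparr>carrier = {f. (\<forall>i. v (f i) \<le> 1) \<and> (\<forall>i\<ge>r. f i = 0)},
     mult = (\<lambda>f g i. f i * g i), one = (\<lambda>i. 1), zero = (\<lambda>i. 0),
     add = (\<lambda>f g i. f i + g i), smult = (\<lambda>a f i. a * f i)\<rparr>"

text \<open>For sets Y \<subseteq> X of a K^o-module M: the subquotient X/Y is almost zero,
  i.e. annihilated by K^oo.\<close>
definition almost_zero_sq :: "('k::field \<Rightarrow> real) \<Rightarrow> ('k, 'm, 'c) module_scheme \<Rightarrow> 'm set \<Rightarrow> 'm set \<Rightarrow> bool" where
  "almost_zero_sq v M X Y \<longleftrightarrow> (\<forall>d\<in>Kmax v. \<forall>x\<in>X. d \<odot>\<^bsub>M\<^esub> x \<in> Y)"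

text \<open>The almost module (X/Y)^a is annihilated by the ideal I (I (X/Y) is almost zero).\<close>
definition almost_annihilated :: "('k::field \<Rightarrow> real) \<Rightarrow> ('k, 'm, 'c) module_scheme \<Rightarrow> 'k set \<Rightarrow> 'm set \<Rightarrow> 'm set \<Rightarrow> bool" where
  "almost_annihilated v M I X Y \<longleftrightarrow> (\<forall>e\<in>I. almost_zero_sq v M ((\<lambda>x. e \<odot>\<^bsub>M\<^esub> x) ` X) Y)"

text \<open>A morphism A^a -> B^a in the Serre quotient category (almost K^o-modules)
  is represented (Gabriel's description of Hom in a Serre quotient) by a submodule
  A' of A with A/A' almost zero, a submodule B' of B that is almost zero, and a
  K^o-linear map A' -> B/B'; the latter is given by a map g : A' -> B that is
  linear modulo B'.\<close>
definition almost_roof ::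
  "('k::field \<Rightarrow> real) \<Rightarrow> ('k, 'a, 'c) module_scheme \<Rightarrow> ('k, 'b, 'd) module_scheme \<Rightarrow>
   'a set \<Rightarrow> 'b set \<Rightarrow> ('a \<Rightarrow> 'b) \<Rightarrow> bool" where
  "almost_roof v A B A' B' g \<longleftrightarrow>
     submodule A' (Kint v) A \<and> almost_zero_sq v A (carrier A) A' \<and>
     submodule B' (Kint v) B \<and> almost_zero_sq v B B' {\<zero>\<^bsub>B\<^esub>} \<and>
     g \<in> A' \<rightarrow> carrier B \<and>
     (\<forall>x\<in>A'. \<forall>y\<in>A'. g (x \<oplus>\<^bsub>A\<^esub> y) \<ominus>\<^bsub>B\<^esub> (g x \<oplus>\<^bsub>B\<^esub> g y) \<in> B') \<and>
     (\<forall>a\<in>carrier (Kint v). \<forall>x\<in>A'. g (a \<odot>\<^bsub>A\<^esub> x) \<ominus>\<^bsub>B\<^esub> (a \<odot>\<^bsub>B\<^esub> g x) \<in> B')"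

text \<open>Kernel of the represented morphism (a submodule of A') and its image
  (a submodule of B containing B'); the cokernel is B / roof_image.\<close>
definition roof_kernel :: "('k, 'b, 'd) module_scheme \<Rightarrow> 'a set \<Rightarrow> 'b set \<Rightarrow> ('a \<Rightarrow> 'b) \<Rightarrow> 'a set" where
  "roof_kernel B A' B' g = {x\<in>A'. g x \<in> B'}"

definition roof_image :: "('k, 'b, 'd) module_scheme \<Rightarrow> 'a set \<Rightarrow> 'b set \<Rightarrow> ('a \<Rightarrow> 'b) \<Rightarrow> 'b set" where
  "roof_image B A' B' g = {y\<in>carrier B. \<exists>x\<in>A'. y \<ominus>\<^bsub>B\<^esub> g x \<in> B'}"

definition almost_finite_free :: "('k::field \<Rightarrow> real) \<Rightarrow> ('k, 'm, 'c) module_scheme \<Rightarrow> nat \<Rightarrow> bool" where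
  "almost_finite_free v M r \<longleftrightarrow>
     (\<forall>S. finite S \<and> S \<subseteq> Kmax v \<longrightarrow>
        (\<exists>A' B' g. almost_roof v (Kfree v r) M A' B' g \<and>
           almost_annihilated v (Kfree v r) (genideal (Kint v) S)
              (roof_kernel M A' B' g) {\<zero>\<^bsub>Kfree v r\<^esub>} \<and>
           almost_annihilated v M (genideal (Kint v) S)
              (carrier M) (roof_image M A' B' g)))"

definition almost_isomorphic :: "('k::field \<Rightarrow> real) \<Rightarrow> ('k, 'a, 'c) module_scheme \<Rightarrow> ('k, 'b, 'd) module_scheme \<Rightarrow> bool" where
  "almost_isomorphic v A B \<longleftrightarrow>
     (\<exists>A' B' g. almost_roof v A B A' B' g \<and>
        almost_zero_sq v A (roof_kernel B A' B' g) {\<zero>\<^bsub>A\<^esub>} \<and>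
        almost_zero_sq v B (carrier B) (roof_image B A' B' g))"

end

theory Submission
  imports Defs
begin


definition Vr :: "nat \<Rightarrow> (nat \<Rightarrow> 'k::field) set" where
  "Vr r = {x. \<forall>i\<ge>r. x i = 0}"

definition comb :: "(nat \<Rightarrow> nat \<Rightarrow> 'k::field) \<Rightarrow> nat \<Rightarrow> (nat \<Rightarrow> 'k) \<Rightarrow> nat \<Rightarrow> 'k" where
  "comb e r x = (\<lambda>j. \<Sum>i<r. x i * e i j)"

definition is_lat :: "('k::field \<Rightarrow> real) \<Rightarrow> nat \<Rightarrow> (nat \<Rightarrow> 'k) set \<Rightarrow> bool" where
  "is_lat v r L \<longleftrightarrow> L \<subseteq> Vr r \<and> (\<forall>x\<in>L. \<forall>y\<in>L. (\<lambda>i. x i + y i) \<in> L) \<and>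
     (\<forall>a. \<forall>x\<in>L. v a \<le> 1 \<longrightarrow> (\<lambda>i. a * x i) \<in> L) \<and> (\<forall>x\<in>L. \<forall>i. v (x i) \<le> 1) \<and>
     (\<exists>c. c \<noteq> 0 \<and> (\<forall>x\<in>Vr r. (\<forall>i. v (x i) \<le> 1) \<longrightarrow> (\<lambda>i. c * x i) \<in> L))"

lemma comb_add: "comb e r (\<lambda>i. x i + y i) = (\<lambda>j. comb e r x j + comb e r y j)"
  unfolding comb_def by (simp add: distrib_right sum.distrib)

lemma comb_diff: "comb e r (\<lambda>i. x i - y i) = (\<lambda>j. comb e r x j - comb e r y j)"
  unfolding comb_def by (simp add: left_diff_distrib sum_subtractf)

lemma comb_scale: "comb e r (\<lambda>i. c * x i) = (\<lambda>j. c * comb e r x j)"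
  unfolding comb_def by (simp add: sum_distrib_left mult.assoc)

lemma comb_div: "comb e r (\<lambda>i. x i / c) = (\<lambda>j. comb e r x j / c)"
  unfolding comb_def by (simp add: sum_divide_distrib)

lemma comb_cong: "(\<And>i. i < r \<Longrightarrow> x i = y i) \<Longrightarrow> comb e r x = comb e r y"
  unfolding comb_def by (intro ext sum.cong) auto

lemma comb_Suc_upd: "comb (e(r := w)) (Suc r) x = (\<lambda>j. comb e r x j + x r * w j)"
proof -
  have "(\<Sum>i<r. x i * (e(r := w)) i j) = (\<Sum>i<r. x i * e i j)" for j
    by (intro sum.cong) auto
  then show ?thesis unfolding comb_def by (simp add: fun_eq_iff)
qed

lemma comb_Vr: "(\<And>i. i < r \<Longrightarrow> e i \<in> Vr s) \<Longrightarrow> comb e r x \<in> Vr s"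
  unfolding comb_def Vr_def by auto

lemma Vr_Suc: "x \<in> Vr r \<Longrightarrow> x \<in> Vr (Suc r)"
  unfolding Vr_def by auto

locale nav =
  fixes v :: "'k::field \<Rightarrow> real"
  assumes nonarch: "nonarch_abs v"
    and sph: "spherically_complete v"
    and vg: "value_group v = {0<..}"
begin

lemma ge0[simp]: "v x \<ge> 0" using nonarch unfolding nonarch_abs_def by auto
lemma zero_iff[simp]: "v x = 0 \<longleftrightarrow> x = 0" using nonarch unfolding nonarch_abs_def by auto
lemma vmult[simp]: "v (x*y) = v x * v y" using nonarch unfolding nonarch_abs_def by auto
lemma vadd: "v (x+y) \<le> max (v x) (v y)" using nonarch unfolding nonarch_abs_def by auto
lemma v0[simp]: "v 0 = 0" by simp
lemma v1[simp]: "v 1 = 1"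
proof -
  have "v 1 = v 1 * v 1" using vmult[of 1 1] by simp
  moreover have "v 1 \<noteq> 0" by simp
  ultimately show ?thesis by (metis mult_cancel_right1)
qed
lemma vm1[simp]: "v (-1) = 1"
proof -
  have "v (-1) * v (-1) = 1" using vmult[of "-1" "-1"] by simp
  then have "\<bar>v (-1)\<bar> = 1" using abs_square_eq_1[of "v (-1)"] by (simp add: power2_eq_square)
  then show ?thesis using ge0[of "-1"] by simp
qed
lemma vminus[simp]: "v (-x) = v x" using vmult[of "-1" x] by simp
lemma vdiff: "v (x-y) \<le> max (v x) (v y)" using vadd[of x "-y"] by simp
lemma vinv[simp]: "v (inverse x) = inverse (v x)"
proof (cases "x = 0")
  case False
  then have "v (inverse x) * v x = 1" using vmult[of "inverse x" x] by simp
  then show ?thesis using inverse_unique[of "v x" "v (inverse x)"] by (simp add: mult.commute)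
qed simp
lemma vdiv[simp]: "v (x / y) = v x / v y" by (simp add: divide_inverse)
lemma vtri: "v (x - z) \<le> max (v (x - y)) (v (y - z))"
  using vadd[of "x-y" "y-z"] by simp

lemma exval: "t > 0 \<Longrightarrow> \<exists>x. v x = t"
  using vg unfolding value_group_def by (metis (no_types, lifting) greaterThan_iff image_iff)


lemma lat_add: "is_lat v r L \<Longrightarrow> x\<in>L \<Longrightarrow> y\<in>L \<Longrightarrow> (\<lambda>i. x i + y i) \<in> L"
  unfolding is_lat_def by blast
lemma lat_scale: "is_lat v r L \<Longrightarrow> x\<in>L \<Longrightarrow> v a \<le> 1 \<Longrightarrow> (\<lambda>i. a * x i) \<in> L"
  unfolding is_lat_def by blast
lemma lat_diff: assumes "is_lat v r L" "x\<in>L" "y\<in>L" shows "(\<lambda>i. x i - y i) \<in> L"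
proof -
  have "(\<lambda>i. (-1) * y i) \<in> L" using lat_scale[OF assms(1,3), of "-1"] by simp
  from lat_add[OF assms(1,2) this] show ?thesis by simp
qed
lemma lat_Vr: "is_lat v r L \<Longrightarrow> x \<in> L \<Longrightarrow> x \<in> Vr r" unfolding is_lat_def by blast
lemma lat_bdd: "is_lat v r L \<Longrightarrow> x \<in> L \<Longrightarrow> v (x i) \<le> 1" unfolding is_lat_def by blast
lemma lat_c: "is_lat v r L \<Longrightarrow> \<exists>c. c \<noteq> 0 \<and> (\<forall>x\<in>Vr r. (\<forall>i. v (x i) \<le> 1) \<longrightarrow> (\<lambda>i. c * x i) \<in> L)"
  unfolding is_lat_def by blast
lemma lat_zero: assumes "is_lat v r L" shows "(\<lambda>i. 0) \<in> L"
proof -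
  obtain c where c: "c \<noteq> 0" "\<forall>x\<in>Vr r. (\<forall>i. v (x i) \<le> 1) \<longrightarrow> (\<lambda>i. c * x i) \<in> L"
    using lat_c[OF assms] by blast
  have "(\<lambda>i. 0) \<in> Vr r" unfolding Vr_def by simp
  with c(2) show ?thesis by force
qed

lemma lat_sub: assumes L: "is_lat v (Suc r) L" shows "is_lat v r {x\<in>L. x r = 0}"
  unfolding is_lat_def
proof (intro conjI)
  show "{x\<in>L. x r = 0} \<subseteq> Vr r"
  proof
    fix x assume "x \<in> {x\<in>L. x r = 0}"
    then have "x \<in> Vr (Suc r)" "x r = 0" using lat_Vr[OF L] by auto
    then have "x i = 0" if "r \<le> i" for i using that by (cases "i = r") (auto simp: Vr_def)
    then show "x \<in> Vr r" unfolding Vr_def by blast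
  qed
  show "\<forall>x\<in>{x \<in> L. x r = 0}. \<forall>y\<in>{x \<in> L. x r = 0}. (\<lambda>i. x i + y i) \<in> {x \<in> L. x r = 0}"
    using lat_add[OF L] by auto
  show "\<forall>a. \<forall>x\<in>{x \<in> L. x r = 0}. v a \<le> 1 \<longrightarrow> (\<lambda>i. a * x i) \<in> {x \<in> L. x r = 0}"
    using lat_scale[OF L] by auto
  show "\<forall>x\<in>{x \<in> L. x r = 0}. \<forall>i. v (x i) \<le> 1" using lat_bdd[OF L] by auto
  obtain c where c: "c \<noteq> 0" "\<forall>x\<in>Vr (Suc r). (\<forall>i. v (x i) \<le> 1) \<longrightarrow> (\<lambda>i. c * x i) \<in> L"
    using lat_c[OF L] by blast
  show "\<exists>c. c \<noteq> 0 \<and> (\<forall>x\<in>Vr r. (\<forall>i. v (x i) \<le> 1) \<longrightarrow> (\<lambda>i. c * x i) \<in> {x \<in> L. x r = 0})"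
  proof (intro exI[of _ c] conjI ballI impI)
    fix x :: "nat \<Rightarrow> 'k" assume "x \<in> Vr r" "\<forall>i. v (x i) \<le> 1"
    then show "(\<lambda>i. c * x i) \<in> {x \<in> L. x r = 0}" using c(2) Vr_Suc[of x r]
      by (auto simp: Vr_def)
  qed (use c in auto)
qed

lemma extend:
  assumes L: "is_lat v (Suc r) L"
  and e1: "\<forall>i<r. e1 i \<in> Vr r" "\<forall>x. comb e1 r x = (\<lambda>_. 0) \<longrightarrow> (\<forall>i<r. x i = 0)"
     "\<forall>x. (\<forall>i. v (x i) < 1) \<longrightarrow> comb e1 r x \<in> {x\<in>L. x r = 0}"
  and w: "w \<in> Vr (Suc r)" "w r \<noteq> 0" "\<forall>y\<in>L. v (y r) \<le> v (w r)"
   "\<forall>b. v b < 1 \<longrightarrow> (\<lambda>i. b * w i) \<in> L"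
   "\<forall>y\<in>L. \<exists>x\<in>Vr r. (\<forall>i. v (x i) \<le> 1) \<and> comb e1 r x = (\<lambda>i. y i - (y r / w r) * w i)"
  shows "\<exists>e. (\<forall>i<Suc r. e i \<in> Vr (Suc r)) \<and> (\<forall>x. comb e (Suc r) x = (\<lambda>_. 0) \<longrightarrow> (\<forall>i<Suc r. x i = 0))
     \<and> (\<forall>x. (\<forall>i. v (x i) < 1) \<longrightarrow> comb e (Suc r) x \<in> L)
     \<and> (\<forall>y\<in>L. \<exists>x\<in>Vr (Suc r). (\<forall>i. v (x i) \<le> 1) \<and> comb e (Suc r) x = y)"
proof (intro exI[of _ "e1(r := w)"] conjI allI impI ballI; (intro allI impI ballI)?)
  note ce = comb_Suc_upd[of e1 r w]
  have c0: "comb e1 r x r = 0" for x using comb_Vr[of r e1 r x] e1(1) unfolding Vr_def by auto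
  show "(e1(r := w)) i \<in> Vr (Suc r)" if "i < Suc r" for i
    using that e1(1) w(1) Vr_Suc by (auto simp: less_Suc_eq)
  show "x i = 0" if h: "comb (e1(r := w)) (Suc r) x = (\<lambda>_. 0)" and i: "i < Suc r" for x i
  proof -
    have h2: "comb e1 r x j + x r * w j = 0" for j using h unfolding ce by metis
    from h2[of r] c0 w(2) have xr: "x r = 0" by simp
    from h2 xr have "comb e1 r x = (\<lambda>_. 0)" by (simp add: fun_eq_iff)
    with e1(2) xr i show ?thesis by (auto simp: less_Suc_eq)
  qed
  show "comb (e1(r := w)) (Suc r) x \<in> L" if h: "\<forall>i. v (x i) < 1" for x
  proof -
    have "comb e1 r x \<in> L" using e1(3) h by blast
    moreover have "(\<lambda>i. x r * w i) \<in> L" using w(4) h by blast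
    ultimately show ?thesis unfolding ce using lat_add[OF L] by blast
  qed
  show "\<exists>x\<in>Vr (Suc r). (\<forall>i. v (x i) \<le> 1) \<and> comb (e1(r := w)) (Suc r) x = y" if y: "y \<in> L" for y
  proof -
    obtain x1 where x1: "x1 \<in> Vr r" "\<forall>i. v (x1 i) \<le> 1" "comb e1 r x1 = (\<lambda>i. y i - (y r / w r) * w i)"
      using w(5) y by blast
    define x where "x = x1(r := y r / w r)"
    have "x \<in> Vr (Suc r)" using x1(1) unfolding x_def Vr_def by auto
    have "v (w r) > 0" using w(2) ge0[of "w r"] zero_iff[of "w r"] by linarith
    then have "v (y r) / v (w r) \<le> 1" using w(3) y by (simp add: divide_le_eq_1)
    then have "\<forall>i. v (x i) \<le> 1" using x1(2) unfolding x_def by auto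
    moreover note \<open>x \<in> Vr (Suc r)\<close>
    moreover have "comb e1 r x = comb e1 r x1" unfolding x_def by (rule comb_cong) auto
    then have "comb (e1(r := w)) (Suc r) x = y" unfolding ce using x1(3) by (simp add: x_def fun_eq_iff)
    ultimately show ?thesis by blast
  qed
qed

end


definition tt :: "nat \<Rightarrow> real" where "tt n = real (n+1) / real (n+2)"

lemma tt_pos: "0 < tt n" unfolding tt_def by simp
lemma tt_less1: "tt n < 1" unfolding tt_def by simp
lemma tt_mono: "m \<le> n \<Longrightarrow> tt m \<le> tt n"
  unfolding tt_def by (simp add: field_simps)
lemma tt_inv_mono: "m \<le> n \<Longrightarrow> 1 / tt n \<le> 1 / tt m"
  using tt_mono tt_pos by (simp add: frac_le)
lemma tt_exceeds: assumes "q < 1" shows "\<exists>n. q < tt n"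
proof -
  obtain n where n: "inverse (real n) < 1 - q" "0 < n" using ex_inverse_of_nat_less[of "1 - q"] assms by auto
  have "1 / real (n+2) < inverse (real n)" using n(2) by (simp add: field_simps)
  with n have "1 / real (n+2) < 1 - q" by linarith
  moreover have "tt n = 1 - 1 / real (n+2)" unfolding tt_def by (simp add: field_simps)
  ultimately show ?thesis by (intro exI[of _ n]) linarith
qed

context nav begin

lemma caseB:
  assumes L: "is_lat v (Suc r) L"
  and e1: "\<forall>i<r. e1 i \<in> Vr r"
     "\<forall>x. (\<forall>i. v (x i) < 1) \<longrightarrow> comb e1 r x \<in> {x\<in>L. x r = 0}"
     "\<forall>y\<in>{x\<in>L. x r = 0}. \<exists>x\<in>Vr r. (\<forall>i. v (x i) \<le> 1) \<and> comb e1 r x = y"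
  and s: "s > 0" "\<forall>y\<in>L. v (y r) < s" "\<forall>q<s. \<exists>y\<in>L. q < v (y r)"
  and a: "v a = s"
  shows "\<exists>w. w \<in> Vr (Suc r) \<and> w r = a \<and> (\<forall>b. v b < 1 \<longrightarrow> (\<lambda>i. b * w i) \<in> L) \<and>
     (\<forall>y\<in>L. \<exists>x\<in>Vr r. (\<forall>i. v (x i) \<le> 1) \<and> comb e1 r x = (\<lambda>i. y i - (y r / a) * w i))"
proof -
  have "\<forall>n. \<exists>b. v b = tt n" using exval tt_pos by blast
  then obtain b where b: "\<And>n. v (b n) = tt n" by metis
  have bnz: "b n \<noteq> 0" for n using b[of n] tt_pos[of n] by auto
  have anz: "a \<noteq> 0" using a s(1) by auto
  have "\<exists>p. p \<in> Vr (Suc r) \<and> p r = a \<and> (\<lambda>i. b n * p i) \<in> L" for n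
  proof -
    have "tt n * s < s" using tt_less1[of n] s(1) by simp
    then obtain y where y: "y \<in> L" "tt n * s < v (y r)" using s(3) by blast
    then have yr: "y r \<noteq> 0" using tt_pos[of n] s(1)
      by (metis mult_pos_pos not_less_iff_gr_or_eq v0)
    define q where "q = b n * a / y r"
    have "v (y r) > 0" using yr ge0[of "y r"] zero_iff[of "y r"] by linarith
    then have vq: "v q < 1" unfolding q_def using y(2) b[of n] a yr
      by (simp add: divide_less_eq)
    define p where "p = (\<lambda>i. q / b n * y i)"
    have "p r = a" unfolding p_def q_def using bnz[of n] yr by (simp add: field_simps)
    moreover have "(\<lambda>i. b n * p i) = (\<lambda>i. q * y i)" unfolding p_def using bnz[of n] by (simp add: field_simps)
    then have "(\<lambda>i. b n * p i) \<in> L" using lat_scale[OF L y(1), of q] vq by simp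
    moreover have "p \<in> Vr (Suc r)" using lat_Vr[OF L y(1)] unfolding p_def Vr_def by auto
    ultimately show ?thesis by blast
  qed
  then obtain P where P: "\<And>n. P n \<in> Vr (Suc r)" "\<And>n. P n r = a" "\<And>n. (\<lambda>i. b n * P n i) \<in> L"
    by metis
  have bP: "(\<lambda>i. c * P n i) \<in> L" if "v c \<le> tt n" for c n
  proof -
    have "(\<lambda>i. c / b n * (b n * P n i)) \<in> L"
      using lat_scale[OF L P(3)[of n], of "c / b n"] that b[of n] tt_pos[of n] by simp
    then show ?thesis using bnz[of n] by simp
  qed
  have "\<exists>u. u \<in> Vr r \<and> (\<forall>i. v (u i) \<le> 1) \<and> comb e1 r u = (\<lambda>i. b n * (P (Suc n) i - P n i))" for n
  proof -
    have "(\<lambda>i. b n * P (Suc n) i) \<in> L" using bP[of "b n" "Suc n"] b tt_mono[of n "Suc n"] by simp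
    then have "(\<lambda>i. b n * P (Suc n) i - b n * P n i) \<in> L" using lat_diff[OF L _ P(3)] by blast
    moreover have "(\<lambda>i. b n * P (Suc n) i - b n * P n i) = (\<lambda>i. b n * (P (Suc n) i - P n i))"
      by (simp add: right_diff_distrib)
    moreover have "b n * (P (Suc n) r - P n r) = 0" using P(2) by simp
    ultimately show ?thesis using e1(3) by auto
  qed
  then obtain u where u: "\<And>n. u n \<in> Vr r" "\<And>n i. v (u n i) \<le> 1"
     "\<And>n. comb e1 r (u n) = (\<lambda>i. b n * (P (Suc n) i - P n i))"
    by metis
  define W where "W n = (\<lambda>i. \<Sum>k<n. u k i / b k)" for n
  have WVr: "W n \<in> Vr r" for n using u(1) unfolding W_def Vr_def by auto
  have PW: "P n = (\<lambda>i. P 0 i + comb e1 r (W n) i)" for n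
  proof (induction n)
    case 0
    show ?case unfolding W_def comb_def by simp
  next
    case (Suc n)
    have "W (Suc n) = (\<lambda>i. W n i + (1 / b n) * u n i)" unfolding W_def by (simp add: fun_eq_iff)
    then have "comb e1 r (W (Suc n)) = (\<lambda>j. comb e1 r (W n) j + (1 / b n) * comb e1 r (u n) j)"
      by (simp add: comb_add comb_div)
    also have "\<dots> = (\<lambda>j. comb e1 r (W n) j + (P (Suc n) j - P n j))"
      using u(3)[of n] bnz[of n] by (simp add: fun_eq_iff)
    finally show ?case using Suc by (simp add: fun_eq_iff)
  qed
  have nest: "cball_v v (W (Suc n) j) (1 / tt (Suc n)) \<subseteq> cball_v v (W n j) (1 / tt n)" for n j
  proof
    fix x assume "x \<in> cball_v v (W (Suc n) j) (1 / tt (Suc n))"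
    then have h1: "v (x - W (Suc n) j) \<le> 1 / tt n"
      using tt_inv_mono[of n "Suc n"] unfolding cball_v_def by auto
    have "W (Suc n) j - W n j = u n j / b n" unfolding W_def by simp
    then have h2: "v (W (Suc n) j - W n j) \<le> 1 / tt n" using u(2)[of n j] b[of n] tt_pos[of n]
      by (simp add: divide_right_mono)
    show "x \<in> cball_v v (W n j) (1 / tt n)" unfolding cball_v_def
      using vtri[of x "W n j" "W (Suc n) j"] h1 h2 by simp
  qed
  have "\<exists>z. \<forall>n. z \<in> cball_v v (W n j) (1 / tt n)" for j
  proof -
    have "(\<Inter>n. cball_v v (W n j) (1 / tt n)) \<noteq> {}"
      using sph[unfolded spherically_complete_def, rule_format, of "\<lambda>n. 1 / tt n" "\<lambda>n. W n j"]
        nest tt_pos by simp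
    then show ?thesis by blast
  qed
  then have "\<exists>z0. \<forall>j. \<forall>n. z0 j \<in> cball_v v (W n j) (1 / tt n)"
    using choice[of "\<lambda>j z. \<forall>n. z \<in> cball_v v (W n j) (1 / tt n)"] by blast
  then obtain z0 where "\<forall>j. \<forall>n. z0 j \<in> cball_v v (W n j) (1 / tt n)" by blast
  then have z0: "\<And>n j. v (z0 j - W n j) \<le> 1 / tt n" unfolding cball_v_def by blast
  define z where "z j = (if j < r then z0 j else 0)" for j
  have zVr: "z \<in> Vr r" unfolding z_def Vr_def by auto
  have hz: "v (z j - W n j) \<le> 1 / tt n" for n j
  proof (cases "j < r")
    case True then show ?thesis using z0 unfolding z_def by simp
  next
    case False then have "W n j = 0" using WVr[of n] unfolding Vr_def by auto
    then show ?thesis using False tt_pos[of n] unfolding z_def by simp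
  qed
  define w where "w = (\<lambda>i. P 0 i + comb e1 r z i)"
  have wn: "w = (\<lambda>i. P n i + comb e1 r (\<lambda>j. z j - W n j) i)" for n
    unfolding w_def comb_diff by (subst PW[of n]) (simp add: fun_eq_iff)
  have cVr: "comb e1 r x \<in> Vr r" for x using comb_Vr[of r e1 r x] e1(1) by auto
  have "w \<in> Vr (Suc r)" using P(1)[of 0] cVr[of z] unfolding w_def Vr_def by auto
  moreover have "w r = a" using P(2)[of 0] cVr[of z] unfolding w_def Vr_def by auto
  moreover have "(\<lambda>i. c * w i) \<in> L" if c: "v c < 1" for c
  proof -
    obtain n where n: "v c < tt n" using tt_exceeds c by blast
    have "(\<lambda>i. c * P n i) \<in> L" using bP[of c n] n by simp
    moreover have "comb e1 r (\<lambda>j. c * (z j - W n j)) \<in> L"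
    proof -
      have "v (c * (z j - W n j)) < 1" for j
      proof -
        have "v (c * (z j - W n j)) \<le> v c * (1 / tt n)" using mult_left_mono[OF hz[of j n] ge0[of c]] by simp
        also have "\<dots> < 1" using n tt_pos[of n] by (simp add: divide_less_eq)
        finally show ?thesis .
      qed
      then show ?thesis using e1(2)[rule_format, of "\<lambda>j. c * (z j - W n j)"] by blast
    qed
    ultimately have "(\<lambda>i. c * P n i + comb e1 r (\<lambda>j. c * (z j - W n j)) i) \<in> L"
      using lat_add[OF L] by blast
    moreover have "(\<lambda>i. c * w i) = (\<lambda>i. c * P n i + comb e1 r (\<lambda>j. c * (z j - W n j)) i)"
      by (subst wn[of n]) (simp add: comb_scale distrib_left)
    ultimately show ?thesis by simp
  qed
  moreover have "\<exists>x\<in>Vr r. (\<forall>i. v (x i) \<le> 1) \<and> comb e1 r x = (\<lambda>i. y i - (y r / a) * w i)" if y: "y \<in> L" for y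
  proof -
    define c where "c = y r / a"
    have vc: "v c < 1" unfolding c_def using s(2) y a s(1) by (simp add: divide_less_eq)
    obtain n where n: "v c < tt n" using tt_exceeds vc by blast
    define Y where "Y = (\<lambda>i. y i - c * P n i)"
    have "Y \<in> L" unfolding Y_def using lat_diff[OF L y bP[of c n]] n by simp
    moreover have "Y r = 0" unfolding Y_def c_def using P(2)[of n] anz by simp
    ultimately obtain x1 where x1: "x1 \<in> Vr r" "\<forall>i. v (x1 i) \<le> 1" "comb e1 r x1 = Y"
      using e1(3) by blast
    define x where "x = (\<lambda>j. x1 j - c * (z j - W n j))"
    have "x \<in> Vr r" using x1(1) zVr WVr[of n] unfolding x_def Vr_def by auto
    moreover have "v (x j) \<le> 1" for j
    proof -
      have "v (c * (z j - W n j)) \<le> v c * (1 / tt n)" using mult_left_mono[OF hz[of j n] ge0[of c]] by simp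
      also have "\<dots> < 1" using n tt_pos[of n] by (simp add: divide_less_eq)
      finally have "v (c * (z j - W n j)) \<le> 1" by simp
      moreover have "v (x1 j) \<le> 1" using x1(2) by blast
      ultimately show ?thesis unfolding x_def using vdiff[of "x1 j" "c * (z j - W n j)"]
        by (simp only: max_def split: if_splits)
    qed
    moreover have "comb e1 r x = (\<lambda>i. y i - c * w i)"
      unfolding x_def comb_diff comb_scale x1(3) Y_def
      by (subst wn[of n]) (simp add: fun_eq_iff algebra_simps comb_diff)
    ultimately show ?thesis unfolding c_def by blast
  qed
  ultimately show ?thesis by blast
qed

end


context nav begin

theorem lattice:
  "is_lat v r L \<Longrightarrow> \<exists>e. (\<forall>i<r. e i \<in> Vr r) \<and> (\<forall>x. comb e r x = (\<lambda>_. 0) \<longrightarrow> (\<forall>i<r. x i = 0))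
     \<and> (\<forall>x. (\<forall>i. v (x i) < 1) \<longrightarrow> comb e r x \<in> L)
     \<and> (\<forall>y\<in>L. \<exists>x\<in>Vr r. (\<forall>i. v (x i) \<le> 1) \<and> comb e r x = y)"
proof (induction r arbitrary: L)
  case 0
  have c0: "comb (\<lambda>_ _. 0) 0 x = (\<lambda>_. 0)" for x :: "nat \<Rightarrow> 'k" unfolding comb_def by simp
  have yz: "y = (\<lambda>_. 0)" if "y \<in> L" for y using lat_Vr[OF 0 that] unfolding Vr_def by auto
  have z0: "(\<lambda>_. 0) \<in> Vr 0" unfolding Vr_def by simp
  show ?case
  proof (intro exI[of _ "\<lambda>_ _. 0"] conjI allI impI ballI)
    fix x :: "nat \<Rightarrow> 'k"
    show "comb (\<lambda>_ _. 0) 0 x \<in> L" unfolding c0 by (rule lat_zero[OF 0])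
  next
    fix y assume "y \<in> L"
    then show "\<exists>x\<in>Vr 0. (\<forall>i. v (x i) \<le> 1) \<and> comb (\<lambda>_ _. 0) 0 x = y"
      using yz z0 c0 by (intro bexI[of _ "\<lambda>_. 0"]) auto
  qed auto
next
  case (Suc r)
  note L = Suc.prems
  obtain e1 where e1: "\<forall>i<r. e1 i \<in> Vr r" "\<forall>x. comb e1 r x = (\<lambda>_. 0) \<longrightarrow> (\<forall>i<r. x i = 0)"
     "\<forall>x. (\<forall>i. v (x i) < 1) \<longrightarrow> comb e1 r x \<in> {x\<in>L. x r = 0}"
     "\<forall>y\<in>{x\<in>L. x r = 0}. \<exists>x\<in>Vr r. (\<forall>i. v (x i) \<le> 1) \<and> comb e1 r x = y"
    using Suc.IH[OF lat_sub[OF L]] by blast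
  define S where "S = (\<lambda>y. v (y r)) ` L"
  define s where "s = Sup S"
  have Sne: "S \<noteq> {}" using lat_zero[OF L] unfolding S_def by blast
  have Sbdd: "bdd_above S" unfolding S_def using lat_bdd[OF L] by (intro bdd_aboveI[of _ 1]) auto
  have les: "v (y r) \<le> s" if "y \<in> L" for y
    unfolding s_def using cSup_upper[OF _ Sbdd] that unfolding S_def by blast
  obtain c where c: "c \<noteq> 0" "\<forall>x\<in>Vr (Suc r). (\<forall>i. v (x i) \<le> 1) \<longrightarrow> (\<lambda>i. c * x i) \<in> L"
    using lat_c[OF L] by blast
  define d where "d = (\<lambda>i. if i = r then (1::'k) else 0)"
  have "d \<in> Vr (Suc r)" unfolding d_def Vr_def by auto
  moreover have "\<forall>i. v (d i) \<le> 1" unfolding d_def by simp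
  ultimately have "(\<lambda>i. c * d i) \<in> L" using c(2) by blast
  from les[OF this] have "v c \<le> s" unfolding d_def by simp
  moreover have "v c > 0" using c(1) ge0[of c] zero_iff[of c] by linarith
  ultimately have spos: "s > 0" by linarith
  show ?case
  proof (cases "\<exists>y0\<in>L. v (y0 r) = s")
    case True
    then obtain y0 where y0: "y0 \<in> L" "v (y0 r) = s" by blast
    have y0r: "y0 r \<noteq> 0" using y0(2) spos by auto
    show ?thesis
    proof (rule extend[OF L e1(1,2,3) lat_Vr[OF L y0(1)] y0r])
      show "\<forall>y\<in>L. v (y r) \<le> v (y0 r)" using les y0(2) by auto
      show "\<forall>b. v b < 1 \<longrightarrow> (\<lambda>i. b * y0 i) \<in> L" using lat_scale[OF L y0(1)] by auto
      show "\<forall>y\<in>L. \<exists>x\<in>Vr r. (\<forall>i. v (x i) \<le> 1) \<and> comb e1 r x = (\<lambda>i. y i - y r / y0 r * y0 i)"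
      proof
        fix y assume y: "y \<in> L"
        have "v (y r) / v (y0 r) \<le> 1" using les[OF y] y0(2) spos by (simp add: divide_le_eq_1)
        then have "(\<lambda>i. y r / y0 r * y0 i) \<in> L" using lat_scale[OF L y0(1), of "y r / y0 r"] by simp
        then have "(\<lambda>i. y i - y r / y0 r * y0 i) \<in> L" using lat_diff[OF L y] by blast
        moreover have "y r - y r / y0 r * y0 r = 0" using y0r by simp
        ultimately show "\<exists>x\<in>Vr r. (\<forall>i. v (x i) \<le> 1) \<and> comb e1 r x = (\<lambda>i. y i - y r / y0 r * y0 i)"
          using e1(4) by auto
      qed
    qed
  next
    case False
    then have lts: "\<forall>y\<in>L. v (y r) < s" using les by (meson less_eq_real_def)
    have apx: "\<forall>q<s. \<exists>y\<in>L. q < v (y r)"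
    proof (intro allI impI)
      fix q assume "q < s"
      then have "\<exists>x\<in>S. q < x" unfolding s_def using less_cSup_iff[OF Sne Sbdd] by blast
      then show "\<exists>y\<in>L. q < v (y r)" unfolding S_def by blast
    qed
    obtain a where a: "v a = s" using exval spos by blast
    obtain w where w: "w \<in> Vr (Suc r)" "w r = a" "\<forall>b. v b < 1 \<longrightarrow> (\<lambda>i. b * w i) \<in> L"
      "\<forall>y\<in>L. \<exists>x\<in>Vr r. (\<forall>i. v (x i) \<le> 1) \<and> comb e1 r x = (\<lambda>i. y i - (y r / a) * w i)"
      using caseB[OF L e1(1,3,4) spos lts apx a] by blast
    have wr: "w r \<noteq> 0" using w(2) a spos by auto
    show ?thesis
      by (rule extend[OF L e1(1,2,3) w(1) wr]) (use w les a in auto)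
  qed
qed

end


lemma Kint_simps[simp]: "carrier (Kint v) = {x. v x \<le> 1}" "x \<otimes>\<^bsub>Kint v\<^esub> y = x * y"
  "x \<oplus>\<^bsub>Kint v\<^esub> y = x + y" "\<one>\<^bsub>Kint v\<^esub> = 1" "\<zero>\<^bsub>Kint v\<^esub> = 0"
  by (simp_all add: Kint_def)

lemma Kfree_simps[simp]: "carrier (Kfree v n) = {f. (\<forall>i. v (f i) \<le> 1) \<and> (\<forall>i\<ge>n. f i = 0)}"
  "f \<oplus>\<^bsub>Kfree v n\<^esub> g = (\<lambda>i. f i + g i)" "a \<odot>\<^bsub>Kfree v n\<^esub> f = (\<lambda>i. a * f i)"
  "\<zero>\<^bsub>Kfree v n\<^esub> = (\<lambda>i. 0)"
  by (simp_all add: Kfree_def)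

context nav begin

lemma vadd1: "v x \<le> 1 \<Longrightarrow> v y \<le> 1 \<Longrightarrow> v (x + y) \<le> 1"
  using vadd[of x y] by simp

lemma Kfree_abelian: "abelian_group (Kfree v n)"
proof (rule abelian_groupI)
  fix x y assume "x \<in> carrier (Kfree v n)" "y \<in> carrier (Kfree v n)"
  then show "x \<oplus>\<^bsub>Kfree v n\<^esub> y \<in> carrier (Kfree v n)"
    using vadd1 by auto
next
  fix x assume x: "x \<in> carrier (Kfree v n)"
  show "\<exists>y\<in>carrier (Kfree v n). y \<oplus>\<^bsub>Kfree v n\<^esub> x = \<zero>\<^bsub>Kfree v n\<^esub>"
    using x by (intro bexI[of _ "\<lambda>i. - x i"]) auto
qed (auto simp: add.assoc add.commute)

lemma Kfree_minus: assumes "x \<in> carrier (Kfree v n)" shows "\<ominus>\<^bsub>Kfree v n\<^esub> x = (\<lambda>i. - x i)"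
proof -
  interpret F: abelian_group "Kfree v n" by (rule Kfree_abelian)
  show ?thesis using assms by (intro F.minus_equality) auto
qed

lemma Kfree_diff: assumes "x \<in> carrier (Kfree v n)" "y \<in> carrier (Kfree v n)"
  shows "x \<ominus>\<^bsub>Kfree v n\<^esub> y = (\<lambda>i. x i - y i)"
  using assms Kfree_minus[of y n] unfolding a_minus_def by simp

lemma Kint_cring: "cring (Kint v)"
proof (rule cringI)
  show "abelian_group (Kint v)"
  proof (rule abelian_groupI)
    fix x assume x: "x \<in> carrier (Kint v)"
    show "\<exists>y\<in>carrier (Kint v). y \<oplus>\<^bsub>Kint v\<^esub> x = \<zero>\<^bsub>Kint v\<^esub>"
      using x by (intro bexI[of _ "- x"]) auto
  qed (use vadd1 in \<open>auto simp: add.assoc add.commute\<close>)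
  show "comm_monoid (Kint v)"
    by (rule comm_monoidI) (auto simp: mult.assoc mult.commute intro: mult_le_one)
qed (auto simp: distrib_right)

lemma Kfree_module: "module (Kint v) (Kfree v n)"
proof (rule moduleI[OF Kint_cring Kfree_abelian])
  fix a x assume "a \<in> carrier (Kint v)" "x \<in> carrier (Kfree v n)"
  then show "a \<odot>\<^bsub>Kfree v n\<^esub> x \<in> carrier (Kfree v n)" by (auto intro: mult_le_one)
qed (auto simp: distrib_right distrib_left mult.assoc)

end

context module begin

lemma neg_cancel: "x \<in> carrier M \<Longrightarrow> y \<in> carrier M \<Longrightarrow> \<ominus>\<^bsub>M\<^esub> x \<oplus>\<^bsub>M\<^esub> (x \<oplus>\<^bsub>M\<^esub> y) = y"
  by (simp add: a_assoc[symmetric] l_neg)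

lemma sub_zero: "submodule H R M \<Longrightarrow> \<zero>\<^bsub>M\<^esub> \<in> H"
  using submoduleE(1,2,3,5)[of H] by (metis (no_types, lifting) ex_in_conv r_neg subset_iff)

lemma cg_refl: "submodule H R M \<Longrightarrow> a \<in> carrier M \<Longrightarrow> a \<ominus>\<^bsub>M\<^esub> a \<in> H"
  using sub_zero by (simp add: a_minus_def r_neg)

lemma cg_sym: assumes "submodule H R M" "a \<in> carrier M" "b \<in> carrier M" "a \<ominus>\<^bsub>M\<^esub> b \<in> H"
  shows "b \<ominus>\<^bsub>M\<^esub> a \<in> H"
proof -
  have "b \<ominus>\<^bsub>M\<^esub> a = \<ominus>\<^bsub>M\<^esub> (a \<ominus>\<^bsub>M\<^esub> b)" using assms(2,3)
    by (simp add: a_minus_def minus_add a_comm)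
  then show ?thesis using submoduleE(3)[OF assms(1) assms(4)] by simp
qed

lemma cg_trans: assumes "submodule H R M" "a \<in> carrier M" "b \<in> carrier M" "c \<in> carrier M"
  "a \<ominus>\<^bsub>M\<^esub> b \<in> H" "b \<ominus>\<^bsub>M\<^esub> c \<in> H"
  shows "a \<ominus>\<^bsub>M\<^esub> c \<in> H"
proof -
  have "a \<ominus>\<^bsub>M\<^esub> c = (a \<ominus>\<^bsub>M\<^esub> b) \<oplus>\<^bsub>M\<^esub> (b \<ominus>\<^bsub>M\<^esub> c)" using assms(2-4)
    by (simp add: a_minus_def a_assoc neg_cancel)
  then show ?thesis using submoduleE(5)[OF assms(1) assms(5,6)] by simp
qed

lemma cg_add: assumes "submodule H R M" "a \<in> carrier M" "b \<in> carrier M" "c \<in> carrier M" "d \<in> carrier M"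
  "a \<ominus>\<^bsub>M\<^esub> b \<in> H" "c \<ominus>\<^bsub>M\<^esub> d \<in> H"
  shows "(a \<oplus>\<^bsub>M\<^esub> c) \<ominus>\<^bsub>M\<^esub> (b \<oplus>\<^bsub>M\<^esub> d) \<in> H"
proof -
  have "(a \<oplus>\<^bsub>M\<^esub> c) \<ominus>\<^bsub>M\<^esub> (b \<oplus>\<^bsub>M\<^esub> d) = (a \<ominus>\<^bsub>M\<^esub> b) \<oplus>\<^bsub>M\<^esub> (c \<ominus>\<^bsub>M\<^esub> d)" using assms(2-5)
    by (simp add: a_minus_def minus_add a_ac)
  then show ?thesis using submoduleE(5)[OF assms(1) assms(6,7)] by simp
qed

lemma cg_zero: assumes "a \<in> carrier M" shows "a \<ominus>\<^bsub>M\<^esub> \<zero>\<^bsub>M\<^esub> = a"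
  using assms by (simp add: a_minus_def)

lemma cg_cancel: assumes "a \<in> carrier M" "b \<in> carrier M" "c \<in> carrier M"
  shows "(a \<oplus>\<^bsub>M\<^esub> c) \<ominus>\<^bsub>M\<^esub> (b \<oplus>\<^bsub>M\<^esub> c) = a \<ominus>\<^bsub>M\<^esub> b"
  using assms by (simp add: a_minus_def minus_add a_ac r_neg)

lemma cg_smult: assumes "submodule H R M" "a \<in> carrier R" "x \<in> carrier M" "y \<in> carrier M"
  "x \<ominus>\<^bsub>M\<^esub> y \<in> H"
  shows "(a \<odot>\<^bsub>M\<^esub> x) \<ominus>\<^bsub>M\<^esub> (a \<odot>\<^bsub>M\<^esub> y) \<in> H"
proof -
  have "a \<odot>\<^bsub>M\<^esub> (x \<ominus>\<^bsub>M\<^esub> y) = (a \<odot>\<^bsub>M\<^esub> x) \<ominus>\<^bsub>M\<^esub> (a \<odot>\<^bsub>M\<^esub> y)" using assms(2-4)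
    by (simp add: a_minus_def smult_r_distr smult_r_minus)
  then show ?thesis using submoduleE(4)[OF assms(1) assms(2,5)] by simp
qed

lemma cg_in: assumes "submodule H R M" "a \<in> carrier M" "b \<in> carrier M" "a \<ominus>\<^bsub>M\<^esub> b \<in> H" "b \<in> H"
  shows "a \<in> H"
proof -
  have "a = (a \<ominus>\<^bsub>M\<^esub> b) \<oplus>\<^bsub>M\<^esub> b" using assms(2,3) by (simp add: a_minus_def a_assoc l_neg)
  then show ?thesis using submoduleE(5)[OF assms(1) assms(4,5)] by simp
qed

lemma cg_in2: assumes "submodule H R M" "a \<in> carrier M" "b \<in> carrier M" "a \<in> H" "b \<in> H"
  shows "a \<ominus>\<^bsub>M\<^esub> b \<in> H"
  using assms submoduleE(3,5)[OF assms(1)] by (simp add: a_minus_def)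

end


locale setting = nav v + module "Kint v" M for v :: "'k::field \<Rightarrow> real" and M :: "('k, 'm) module" +
  fixes r :: nat
  assumes aff: "almost_finite_free v M r"
begin

lemma Fmod: "module (Kint v) (Kfree v r)" by (rule Kfree_module)

lemma vlt1: "v a < 1 \<Longrightarrow> v b \<le> 1 \<Longrightarrow> v (a * b) < 1"
  using mult_left_mono[of "v b" 1 "v a"] by simp

lemma vlt1': "v a \<le> 1 \<Longrightarrow> v b < 1 \<Longrightarrow> v (a * b) < 1"
  using vlt1[of b a] by (simp add: mult.commute)

lemma roof_g0:
  assumes R: "almost_roof v (Kfree v r) M A' B' g"
  shows "g (\<lambda>i. 0) \<in> B'"
proof -
  have A: "submodule A' (Kint v) (Kfree v r)" and B: "submodule B' (Kint v) M"
    and gA: "g \<in> A' \<rightarrow> carrier M"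
    and add: "\<forall>x\<in>A'. \<forall>y\<in>A'. g (x \<oplus>\<^bsub>Kfree v r\<^esub> y) \<ominus>\<^bsub>M\<^esub> (g x \<oplus>\<^bsub>M\<^esub> g y) \<in> B'"
    using R unfolding almost_roof_def by auto
  have z: "(\<lambda>i. 0) \<in> A'" using module.sub_zero[OF Fmod A] by simp
  then have g0: "g (\<lambda>i. 0) \<in> carrier M" using gA by auto
  have "g (\<lambda>i. 0) \<ominus>\<^bsub>M\<^esub> (g (\<lambda>i. 0) \<oplus>\<^bsub>M\<^esub> g (\<lambda>i. 0)) \<in> B'" using add z by force
  moreover have "g (\<lambda>i. 0) \<ominus>\<^bsub>M\<^esub> (g (\<lambda>i. 0) \<oplus>\<^bsub>M\<^esub> g (\<lambda>i. 0)) = \<zero>\<^bsub>M\<^esub> \<ominus>\<^bsub>M\<^esub> g (\<lambda>i. 0)"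
    using cg_cancel[of "\<zero>\<^bsub>M\<^esub>" "g (\<lambda>i. 0)" "g (\<lambda>i. 0)"] g0 by simp
  ultimately have "\<zero>\<^bsub>M\<^esub> \<ominus>\<^bsub>M\<^esub> g (\<lambda>i. 0) \<in> B'" by (simp only:)
  then have "g (\<lambda>i. 0) \<ominus>\<^bsub>M\<^esub> \<zero>\<^bsub>M\<^esub> \<in> B'" using cg_sym[OF B _ g0] by blast
  moreover have "g (\<lambda>i. 0) \<ominus>\<^bsub>M\<^esub> \<zero>\<^bsub>M\<^esub> = g (\<lambda>i. 0)" by (rule cg_zero[OF g0])
  ultimately show ?thesis by (simp only:)
qed

lemma get_roof:
  assumes "\<epsilon> \<noteq> 0" "v \<epsilon> < 1"
  obtains A' B' g where "almost_roof v (Kfree v r) M A' B' g"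
    "\<And>x. x \<in> A' \<Longrightarrow> g x \<in> B' \<Longrightarrow> x = (\<lambda>i. 0)"
    "\<And>d y. v d < 1 \<Longrightarrow> y \<in> carrier M \<Longrightarrow> \<exists>x\<in>A'. ((d * \<epsilon>) \<odot>\<^bsub>M\<^esub> y) \<ominus>\<^bsub>M\<^esub> g x \<in> B'"
proof -
  have "finite {\<epsilon>} \<and> {\<epsilon>} \<subseteq> Kmax v" using assms unfolding Kmax_def by auto
  then obtain A' B' g where R: "almost_roof v (Kfree v r) M A' B' g"
    and K: "almost_annihilated v (Kfree v r) (genideal (Kint v) {\<epsilon>}) (roof_kernel M A' B' g) {\<zero>\<^bsub>Kfree v r\<^esub>}"
    and C: "almost_annihilated v M (genideal (Kint v) {\<epsilon>}) (carrier M) (roof_image M A' B' g)"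
    using aff[unfolded almost_finite_free_def, rule_format, of "{\<epsilon>}"] by blast
  have eI: "\<epsilon> \<in> genideal (Kint v) {\<epsilon>}" unfolding genideal_def by blast
  obtain d0 where d0: "v d0 = 1/2" using exval[of "1/2"] by auto
  then have d0K: "d0 \<in> Kmax v" "d0 \<noteq> 0" unfolding Kmax_def by auto
  show ?thesis
  proof (rule that[OF R])
    fix x assume x: "x \<in> A'" "g x \<in> B'"
    then have "x \<in> roof_kernel M A' B' g" unfolding roof_kernel_def by simp
    then have "\<epsilon> \<odot>\<^bsub>Kfree v r\<^esub> x \<in> (\<lambda>x. \<epsilon> \<odot>\<^bsub>Kfree v r\<^esub> x) ` roof_kernel M A' B' g" by blast
    then have "d0 \<odot>\<^bsub>Kfree v r\<^esub> (\<epsilon> \<odot>\<^bsub>Kfree v r\<^esub> x) \<in> {\<zero>\<^bsub>Kfree v r\<^esub>}"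
      using K[unfolded almost_annihilated_def almost_zero_sq_def, rule_format, OF eI d0K(1)] by blast
    then have "\<forall>i. d0 * (\<epsilon> * x i) = 0" by (simp add: fun_eq_iff)
    then show "x = (\<lambda>i. 0)" using d0K(2) assms(1) by (simp add: fun_eq_iff)
  next
    fix d y assume d: "v d < 1" and y: "y \<in> carrier M"
    have dK: "d \<in> Kmax v" using d unfolding Kmax_def by simp
    have "\<epsilon> \<odot>\<^bsub>M\<^esub> y \<in> (\<lambda>x. \<epsilon> \<odot>\<^bsub>M\<^esub> x) ` carrier M" using y by blast
    then have "d \<odot>\<^bsub>M\<^esub> (\<epsilon> \<odot>\<^bsub>M\<^esub> y) \<in> roof_image M A' B' g"
      using C[unfolded almost_annihilated_def almost_zero_sq_def, rule_format, OF eI dK] by blast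
    moreover have "d \<odot>\<^bsub>M\<^esub> (\<epsilon> \<odot>\<^bsub>M\<^esub> y) = (d * \<epsilon>) \<odot>\<^bsub>M\<^esub> y"
      using smult_assoc1[of d \<epsilon> y] d assms(2) y by simp
    ultimately show "\<exists>x\<in>A'. ((d * \<epsilon>) \<odot>\<^bsub>M\<^esub> y) \<ominus>\<^bsub>M\<^esub> g x \<in> B'"
      unfolding roof_image_def by auto
  qed
qed

end


context setting begin

lemma roof_parts:
  assumes R: "almost_roof v (Kfree v r) M A' B' g"
  shows "submodule A' (Kint v) (Kfree v r)" "submodule B' (Kint v) M" "g \<in> A' \<rightarrow> carrier M"
    "\<And>x y. x \<in> A' \<Longrightarrow> y \<in> A' \<Longrightarrow> g (x \<oplus>\<^bsub>Kfree v r\<^esub> y) \<ominus>\<^bsub>M\<^esub> (g x \<oplus>\<^bsub>M\<^esub> g y) \<in> B'"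
    "\<And>a x. v a \<le> 1 \<Longrightarrow> x \<in> A' \<Longrightarrow> g (a \<odot>\<^bsub>Kfree v r\<^esub> x) \<ominus>\<^bsub>M\<^esub> (a \<odot>\<^bsub>M\<^esub> g x) \<in> B'"
    "\<And>d x. v d < 1 \<Longrightarrow> x \<in> carrier (Kfree v r) \<Longrightarrow> d \<odot>\<^bsub>Kfree v r\<^esub> x \<in> A'"
    "\<And>d y. v d < 1 \<Longrightarrow> y \<in> B' \<Longrightarrow> d \<odot>\<^bsub>M\<^esub> y = \<zero>\<^bsub>M\<^esub>"
    "A' \<subseteq> carrier (Kfree v r)" "B' \<subseteq> carrier M"
proof -
  note RR = R[unfolded almost_roof_def almost_zero_sq_def Kmax_def]
  show A: "submodule A' (Kint v) (Kfree v r)" and B: "submodule B' (Kint v) M" and "g \<in> A' \<rightarrow> carrier M"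
    using RR by auto
  show "\<And>x y. x \<in> A' \<Longrightarrow> y \<in> A' \<Longrightarrow> g (x \<oplus>\<^bsub>Kfree v r\<^esub> y) \<ominus>\<^bsub>M\<^esub> (g x \<oplus>\<^bsub>M\<^esub> g y) \<in> B'"
    using RR by blast
  show "\<And>a x. v a \<le> 1 \<Longrightarrow> x \<in> A' \<Longrightarrow> g (a \<odot>\<^bsub>Kfree v r\<^esub> x) \<ominus>\<^bsub>M\<^esub> (a \<odot>\<^bsub>M\<^esub> g x) \<in> B'"
  proof -
    fix a x assume "v a \<le> 1" "x \<in> A'"
    then show "g (a \<odot>\<^bsub>Kfree v r\<^esub> x) \<ominus>\<^bsub>M\<^esub> (a \<odot>\<^bsub>M\<^esub> g x) \<in> B'"
      using conjunct2[OF conjunct2[OF conjunct2[OF conjunct2[OF conjunct2[OF conjunct2[OF RR]]]]]]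
      by simp
  qed
  show "\<And>d x. v d < 1 \<Longrightarrow> x \<in> carrier (Kfree v r) \<Longrightarrow> d \<odot>\<^bsub>Kfree v r\<^esub> x \<in> A'"
  proof -
    fix d x assume "v d < 1" "x \<in> carrier (Kfree v r)"
    then show "d \<odot>\<^bsub>Kfree v r\<^esub> x \<in> A'" using conjunct1[OF conjunct2[OF RR]] by blast
  qed
  show "\<And>d y. v d < 1 \<Longrightarrow> y \<in> B' \<Longrightarrow> d \<odot>\<^bsub>M\<^esub> y = \<zero>\<^bsub>M\<^esub>"
  proof -
    fix d y assume "v d < 1" "y \<in> B'"
    then show "d \<odot>\<^bsub>M\<^esub> y = \<zero>\<^bsub>M\<^esub>" using conjunct1[OF conjunct2[OF conjunct2[OF conjunct2[OF RR]]]] by blast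
  qed
  show "A' \<subseteq> carrier (Kfree v r)" using module.submoduleE(1)[OF Fmod A] .
  show "B' \<subseteq> carrier M" using submoduleE(1)[OF B] .
qed

end


context setting begin

lemma tors:
  assumes R: "almost_roof v (Kfree v r) M A' B' g"
    and inj: "\<And>x. x \<in> A' \<Longrightarrow> g x \<in> B' \<Longrightarrow> x = (\<lambda>i. 0)"
    and sur: "\<And>d y. v d < 1 \<Longrightarrow> y \<in> carrier M \<Longrightarrow> \<exists>x\<in>A'. ((d * \<epsilon>) \<odot>\<^bsub>M\<^esub> y) \<ominus>\<^bsub>M\<^esub> g x \<in> B'"
    and eps: "v \<epsilon> < 1"
    and k: "\<kappa> \<noteq> 0" "v \<kappa> \<le> 1" and z: "z \<in> carrier M"
    and zt: "\<And>d. v d < 1 \<Longrightarrow> d \<odot>\<^bsub>M\<^esub> (\<kappa> \<odot>\<^bsub>M\<^esub> z) = \<zero>\<^bsub>M\<^esub>"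
    and d': "v d' < 1"
  shows "(d' * \<epsilon>) \<odot>\<^bsub>M\<^esub> z \<in> B'"
proof -
  note P = roof_parts[OF R]
  obtain x where x: "x \<in> A'" "((d' * \<epsilon>) \<odot>\<^bsub>M\<^esub> z) \<ominus>\<^bsub>M\<^esub> g x \<in> B'" using sur[OF d' z] by blast
  have de: "v (d' * \<epsilon>) < 1" using vlt1[OF d'] eps by simp
  have p: "(d' * \<epsilon>) \<odot>\<^bsub>M\<^esub> z \<in> carrier M" using de z smult_closed[of "d' * \<epsilon>" z] by simp
  have gx: "g x \<in> carrier M" using P(3) x(1) by auto
  have kgx0: "\<kappa> \<odot>\<^bsub>M\<^esub> g x \<in> carrier M" using gx k(2) smult_closed[of \<kappa> "g x"] by simp
  have "\<kappa> \<odot>\<^bsub>M\<^esub> ((d' * \<epsilon>) \<odot>\<^bsub>M\<^esub> z) \<ominus>\<^bsub>M\<^esub> \<kappa> \<odot>\<^bsub>M\<^esub> g x \<in> B'"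
    using cg_smult[OF P(2) _ p gx x(2)] k(2) by simp
  moreover have "\<kappa> \<odot>\<^bsub>M\<^esub> ((d' * \<epsilon>) \<odot>\<^bsub>M\<^esub> z) = \<zero>\<^bsub>M\<^esub>"
  proof -
    have "\<kappa> \<odot>\<^bsub>M\<^esub> ((d' * \<epsilon>) \<odot>\<^bsub>M\<^esub> z) = (\<kappa> * (d' * \<epsilon>)) \<odot>\<^bsub>M\<^esub> z"
      using smult_assoc1[of \<kappa> "d' * \<epsilon>" z] k(2) de z by simp
    also have "\<dots> = ((d' * \<epsilon>) * \<kappa>) \<odot>\<^bsub>M\<^esub> z" by (simp add: mult.commute)
    also have "\<dots> = (d' * \<epsilon>) \<odot>\<^bsub>M\<^esub> (\<kappa> \<odot>\<^bsub>M\<^esub> z)"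
      using smult_assoc1[of "d' * \<epsilon>" \<kappa> z] k(2) de z by simp
    also have "\<dots> = \<zero>\<^bsub>M\<^esub>" using zt[OF de] .
    finally show ?thesis .
  qed
  ultimately have "\<zero>\<^bsub>M\<^esub> \<ominus>\<^bsub>M\<^esub> \<kappa> \<odot>\<^bsub>M\<^esub> g x \<in> B'" by (simp only:)
  then have "\<kappa> \<odot>\<^bsub>M\<^esub> g x \<ominus>\<^bsub>M\<^esub> \<zero>\<^bsub>M\<^esub> \<in> B'" using cg_sym[OF P(2) _ kgx0] by blast
  then have kgx: "\<kappa> \<odot>\<^bsub>M\<^esub> g x \<in> B'" using cg_zero[OF kgx0] by (simp only:)
  have kx: "\<kappa> \<odot>\<^bsub>Kfree v r\<^esub> x \<in> A'" using module.submoduleE(4)[OF Fmod P(1), of \<kappa> x] k(2) x(1) by simp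
  have gkx: "g (\<kappa> \<odot>\<^bsub>Kfree v r\<^esub> x) \<in> carrier M" using P(3) kx by auto
  have "g (\<kappa> \<odot>\<^bsub>Kfree v r\<^esub> x) \<ominus>\<^bsub>M\<^esub> \<kappa> \<odot>\<^bsub>M\<^esub> g x \<in> B'" using P(5)[OF k(2) x(1)] .
  then have "g (\<kappa> \<odot>\<^bsub>Kfree v r\<^esub> x) \<in> B'" using cg_in[OF P(2) gkx kgx0 _ kgx] by blast
  then have "\<kappa> \<odot>\<^bsub>Kfree v r\<^esub> x = (\<lambda>i. 0)" using inj kx by blast
  then have "x = (\<lambda>i. 0)" using k(1) by (simp add: fun_eq_iff)
  then have h: "(d' * \<epsilon>) \<odot>\<^bsub>M\<^esub> z \<ominus>\<^bsub>M\<^esub> g (\<lambda>i. 0) \<in> B'" using x(2) by simp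
  have "g (\<lambda>i. 0) \<in> carrier M" using P(3) \<open>x = (\<lambda>i. 0)\<close> x(1) by auto
  then show ?thesis using cg_in[OF P(2) p _ h roof_g0[OF R]] by blast
qed

lemma az:
  assumes k: "\<kappa> \<noteq> 0" "v \<kappa> \<le> 1" and z: "z \<in> carrier M"
    and zt: "\<And>d. v d < 1 \<Longrightarrow> d \<odot>\<^bsub>M\<^esub> (\<kappa> \<odot>\<^bsub>M\<^esub> z) = \<zero>\<^bsub>M\<^esub>"
    and d: "v d < 1"
  shows "d \<odot>\<^bsub>M\<^esub> z = \<zero>\<^bsub>M\<^esub>"
proof (cases "d = 0")
  case True
  then show ?thesis using smult_l_null[OF z] by simp
next
  case False
  define t where "t = v d"
  have t: "0 < t" "t < 1" using False d ge0[of d] zero_iff[of d] unfolding t_def by linarith+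
  define q where "q = root 3 t"
  have q: "0 < q" "q < 1" "q * q * q = t"
    using t real_root_gt_zero[of 3 t] real_root_pow_pos[of 3 t] unfolding q_def
    by (auto simp: power3_eq_cube)
  obtain e2 where e2: "v e2 = q" using exval q(1) by blast
  obtain d' where d': "v d' = q" using exval q(1) by blast
  have e2nz: "e2 \<noteq> 0" and d'nz: "d' \<noteq> 0" using e2 d' q(1) by auto
  have e2lt: "v e2 < 1" using e2 q by simp
  obtain A2 B2 g2 where R2: "almost_roof v (Kfree v r) M A2 B2 g2"
    and inj2: "\<And>x. x \<in> A2 \<Longrightarrow> g2 x \<in> B2 \<Longrightarrow> x = (\<lambda>i. 0)"
    and sur2: "\<And>d y. v d < 1 \<Longrightarrow> y \<in> carrier M \<Longrightarrow> \<exists>x\<in>A2. ((d * e2) \<odot>\<^bsub>M\<^esub> y) \<ominus>\<^bsub>M\<^esub> g2 x \<in> B2"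
    using get_roof[OF e2nz e2lt] by metis
  have inB: "(d' * e2) \<odot>\<^bsub>M\<^esub> z \<in> B2"
    using tors[OF R2 inj2 sur2 e2lt k z zt] d' q by simp
  define d'' where "d'' = d / (d' * e2)"
  have vd'': "v d'' = q" unfolding d''_def using d' e2 q t_def by (simp add: field_simps)
  have "d'' \<odot>\<^bsub>M\<^esub> ((d' * e2) \<odot>\<^bsub>M\<^esub> z) = \<zero>\<^bsub>M\<^esub>" using roof_parts(7)[OF R2 _ inB] vd'' q by simp
  moreover have "d'' \<odot>\<^bsub>M\<^esub> ((d' * e2) \<odot>\<^bsub>M\<^esub> z) = (d'' * (d' * e2)) \<odot>\<^bsub>M\<^esub> z"
    using smult_assoc1[of d'' "d' * e2" z] vd'' d' e2 q z mult_le_one[of q q] by simp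
  moreover have "d'' * (d' * e2) = d" unfolding d''_def using d'nz e2nz by simp
  ultimately show ?thesis by simp
qed

end


context setting begin

lemma psi_exists:
  obtains psi :: "'m \<Rightarrow> nat \<Rightarrow> 'k" where
    "\<And>y. y \<in> carrier M \<Longrightarrow> psi y \<in> carrier (Kfree v r)"
    "\<And>y1 y2. y1 \<in> carrier M \<Longrightarrow> y2 \<in> carrier M \<Longrightarrow> psi (y1 \<oplus>\<^bsub>M\<^esub> y2) = (\<lambda>i. psi y1 i + psi y2 i)"
    "\<And>a y. v a \<le> 1 \<Longrightarrow> y \<in> carrier M \<Longrightarrow> psi (a \<odot>\<^bsub>M\<^esub> y) = (\<lambda>i. a * psi y i)"
    "\<And>y d. y \<in> carrier M \<Longrightarrow> psi y = (\<lambda>i. 0) \<Longrightarrow> v d < 1 \<Longrightarrow> d \<odot>\<^bsub>M\<^esub> y = \<zero>\<^bsub>M\<^esub>"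
    "\<exists>c. c \<noteq> 0 \<and> (\<forall>x\<in>Vr r. (\<forall>i. v (x i) \<le> 1) \<longrightarrow> (\<exists>y\<in>carrier M. psi y = (\<lambda>i. c * x i)))"
proof -
  obtain e0 where e0: "v e0 = 1/2" using exval[of "1/2"] by auto
  obtain dl where dl: "v dl = 1/2" using exval[of "1/2"] by auto
  have e0nz: "e0 \<noteq> 0" and e0lt: "v e0 < 1" using e0 by auto
  obtain A' B' g where R: "almost_roof v (Kfree v r) M A' B' g"
    and inj: "\<And>x. x \<in> A' \<Longrightarrow> g x \<in> B' \<Longrightarrow> x = (\<lambda>i. 0)"
    and sur: "\<And>d y. v d < 1 \<Longrightarrow> y \<in> carrier M \<Longrightarrow> \<exists>x\<in>A'. ((d * e0) \<odot>\<^bsub>M\<^esub> y) \<ominus>\<^bsub>M\<^esub> g x \<in> B'"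
    using get_roof[OF e0nz e0lt] by metis
  note P = roof_parts[OF R]
  define \<kappa> where "\<kappa> = dl * e0"
  have knz: "\<kappa> \<noteq> 0" using dl e0 unfolding \<kappa>_def by auto
  have k1: "v \<kappa> \<le> 1" unfolding \<kappa>_def by (simp add: dl e0)
  have gC: "g x \<in> carrier M" if "x \<in> A'" for x using P(3) that by auto
  have AC: "x \<in> carrier (Kfree v r)" if "x \<in> A'" for x using P(8) that by auto
  have kyC: "\<kappa> \<odot>\<^bsub>M\<^esub> y \<in> carrier M" if "y \<in> carrier M" for y using smult_closed[of \<kappa> y] k1 that by simp
  have ex: "\<exists>x\<in>A'. (\<kappa> \<odot>\<^bsub>M\<^esub> y) \<ominus>\<^bsub>M\<^esub> g x \<in> B'" if "y \<in> carrier M" for y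
    using sur[of dl y] dl that unfolding \<kappa>_def by simp
  have uniq: "x1 = x2" if y: "y \<in> carrier M" and x: "x1 \<in> A'" "x2 \<in> A'"
    and h: "(\<kappa> \<odot>\<^bsub>M\<^esub> y) \<ominus>\<^bsub>M\<^esub> g x1 \<in> B'" "(\<kappa> \<odot>\<^bsub>M\<^esub> y) \<ominus>\<^bsub>M\<^esub> g x2 \<in> B'" for y x1 x2
  proof -
    have "g x1 \<ominus>\<^bsub>M\<^esub> (\<kappa> \<odot>\<^bsub>M\<^esub> y) \<in> B'" using cg_sym[OF P(2) kyC[OF y] gC[OF x(1)] h(1)] .
    then have d12: "g x1 \<ominus>\<^bsub>M\<^esub> g x2 \<in> B'" using cg_trans[OF P(2) gC[OF x(1)] kyC[OF y] gC[OF x(2)] _ h(2)] by blast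
    define x3 where "x3 = x1 \<ominus>\<^bsub>Kfree v r\<^esub> x2"
    have x3eq: "x3 = (\<lambda>i. x1 i - x2 i)" using Kfree_diff[OF AC[OF x(1)] AC[OF x(2)]] unfolding x3_def .
    have "\<ominus>\<^bsub>Kfree v r\<^esub> x2 \<in> A'" using module.submoduleE(3)[OF Fmod P(1) x(2)] .
    then have "x1 \<oplus>\<^bsub>Kfree v r\<^esub> \<ominus>\<^bsub>Kfree v r\<^esub> x2 \<in> A'" using module.submoduleE(5)[OF Fmod P(1) x(1)] by blast
    then have x3A: "x3 \<in> A'" unfolding x3_def a_minus_def .
    have s32: "g x3 \<oplus>\<^bsub>M\<^esub> g x2 \<in> carrier M" using gC[OF x3A] gC[OF x(2)] by simp
    have "x3 \<oplus>\<^bsub>Kfree v r\<^esub> x2 = x1" using x3eq by simp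
    then have "g x1 \<ominus>\<^bsub>M\<^esub> (g x3 \<oplus>\<^bsub>M\<^esub> g x2) \<in> B'" using P(4)[OF x3A x(2)] by simp
    then have "(g x3 \<oplus>\<^bsub>M\<^esub> g x2) \<ominus>\<^bsub>M\<^esub> g x1 \<in> B'" using cg_sym[OF P(2) gC[OF x(1)] s32] by blast
    then have h3: "(g x3 \<oplus>\<^bsub>M\<^esub> g x2) \<ominus>\<^bsub>M\<^esub> g x2 \<in> B'"
      using cg_trans[OF P(2) s32 gC[OF x(1)] gC[OF x(2)] _ d12] by blast
    have "(g x3 \<oplus>\<^bsub>M\<^esub> g x2) \<ominus>\<^bsub>M\<^esub> g x2 = (g x3 \<oplus>\<^bsub>M\<^esub> g x2) \<ominus>\<^bsub>M\<^esub> (\<zero>\<^bsub>M\<^esub> \<oplus>\<^bsub>M\<^esub> g x2)" using gC[OF x(2)] by simp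
    also have "\<dots> = g x3 \<ominus>\<^bsub>M\<^esub> \<zero>\<^bsub>M\<^esub>" by (rule cg_cancel) (use gC[OF x3A] gC[OF x(2)] in simp_all)
    also have "\<dots> = g x3" by (rule cg_zero[OF gC[OF x3A]])
    finally have "g x3 \<in> B'" using h3 by simp
    then have "x3 = (\<lambda>i. 0)" using inj x3A by blast
    then show ?thesis using x3eq by (simp add: fun_eq_iff)
  qed
  define psi where "psi y = (THE x. x \<in> A' \<and> (\<kappa> \<odot>\<^bsub>M\<^esub> y) \<ominus>\<^bsub>M\<^esub> g x \<in> B')" for y
  have psiP: "psi y \<in> A' \<and> (\<kappa> \<odot>\<^bsub>M\<^esub> y) \<ominus>\<^bsub>M\<^esub> g (psi y) \<in> B'" if "y \<in> carrier M" for y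
  proof -
    have "\<exists>!x. x \<in> A' \<and> (\<kappa> \<odot>\<^bsub>M\<^esub> y) \<ominus>\<^bsub>M\<^esub> g x \<in> B'" using ex[OF that] uniq[OF that] by blast
    then show ?thesis unfolding psi_def by (rule theI')
  qed
  have psiE: "psi y = x" if "y \<in> carrier M" "x \<in> A'" "(\<kappa> \<odot>\<^bsub>M\<^esub> y) \<ominus>\<^bsub>M\<^esub> g x \<in> B'" for y x
    using uniq[OF that(1) _ that(2) _ that(3)] psiP[OF that(1)] by blast
  show ?thesis
  proof (rule that[of psi])
    fix y assume "y \<in> carrier M"
    then show "psi y \<in> carrier (Kfree v r)" using AC[OF conjunct1[OF psiP]] by blast
  next
    fix y1 y2 assume y: "y1 \<in> carrier M" "y2 \<in> carrier M"
    define x1 where "x1 = psi y1"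
    define x2 where "x2 = psi y2"
    have x: "x1 \<in> A'" "x2 \<in> A'" "(\<kappa> \<odot>\<^bsub>M\<^esub> y1) \<ominus>\<^bsub>M\<^esub> g x1 \<in> B'" "(\<kappa> \<odot>\<^bsub>M\<^esub> y2) \<ominus>\<^bsub>M\<^esub> g x2 \<in> B'"
      using psiP y unfolding x1_def x2_def by auto
    have x12: "x1 \<oplus>\<^bsub>Kfree v r\<^esub> x2 \<in> A'" using module.submoduleE(5)[OF Fmod P(1) x(1) x(2)] .
    have s12: "g x1 \<oplus>\<^bsub>M\<^esub> g x2 \<in> carrier M" using gC[OF x(1)] gC[OF x(2)] by simp
    have yy: "y1 \<oplus>\<^bsub>M\<^esub> y2 \<in> carrier M" using y by simp
    have "((\<kappa> \<odot>\<^bsub>M\<^esub> y1) \<oplus>\<^bsub>M\<^esub> (\<kappa> \<odot>\<^bsub>M\<^esub> y2)) \<ominus>\<^bsub>M\<^esub> (g x1 \<oplus>\<^bsub>M\<^esub> g x2) \<in> B'"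
      using cg_add[OF P(2) kyC[OF y(1)] gC[OF x(1)] kyC[OF y(2)] gC[OF x(2)] x(3,4)] .
    moreover have "\<kappa> \<odot>\<^bsub>M\<^esub> (y1 \<oplus>\<^bsub>M\<^esub> y2) = (\<kappa> \<odot>\<^bsub>M\<^esub> y1) \<oplus>\<^bsub>M\<^esub> (\<kappa> \<odot>\<^bsub>M\<^esub> y2)"
      using smult_r_distr[of \<kappa> y1 y2] k1 y by simp
    ultimately have h1: "(\<kappa> \<odot>\<^bsub>M\<^esub> (y1 \<oplus>\<^bsub>M\<^esub> y2)) \<ominus>\<^bsub>M\<^esub> (g x1 \<oplus>\<^bsub>M\<^esub> g x2) \<in> B'" by simp
    have "(g x1 \<oplus>\<^bsub>M\<^esub> g x2) \<ominus>\<^bsub>M\<^esub> g (x1 \<oplus>\<^bsub>Kfree v r\<^esub> x2) \<in> B'"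
      using cg_sym[OF P(2) gC[OF x12] s12 P(4)[OF x(1,2)]] .
    then have "(\<kappa> \<odot>\<^bsub>M\<^esub> (y1 \<oplus>\<^bsub>M\<^esub> y2)) \<ominus>\<^bsub>M\<^esub> g (x1 \<oplus>\<^bsub>Kfree v r\<^esub> x2) \<in> B'"
      using cg_trans[OF P(2) kyC[OF yy] s12 gC[OF x12] h1] by blast
    then have "psi (y1 \<oplus>\<^bsub>M\<^esub> y2) = x1 \<oplus>\<^bsub>Kfree v r\<^esub> x2" using psiE[OF yy x12] by blast
    then show "psi (y1 \<oplus>\<^bsub>M\<^esub> y2) = (\<lambda>i. psi y1 i + psi y2 i)" unfolding x1_def x2_def by simp
  next
    fix a y assume a: "v a \<le> 1" and y: "y \<in> carrier M"
    define x where "x = psi y"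
    have x: "x \<in> A'" "(\<kappa> \<odot>\<^bsub>M\<^esub> y) \<ominus>\<^bsub>M\<^esub> g x \<in> B'" using psiP y unfolding x_def by auto
    have ax: "a \<odot>\<^bsub>Kfree v r\<^esub> x \<in> A'" using module.submoduleE(4)[OF Fmod P(1), of a x] a x by simp
    have agx: "a \<odot>\<^bsub>M\<^esub> g x \<in> carrier M" using smult_closed[of a "g x"] a gC[OF x(1)] by simp
    have "(a \<odot>\<^bsub>M\<^esub> (\<kappa> \<odot>\<^bsub>M\<^esub> y)) \<ominus>\<^bsub>M\<^esub> (a \<odot>\<^bsub>M\<^esub> g x) \<in> B'"
      using cg_smult[OF P(2) _ kyC[OF y] gC[OF x(1)] x(2)] a by simp
    moreover have "a \<odot>\<^bsub>M\<^esub> (\<kappa> \<odot>\<^bsub>M\<^esub> y) = \<kappa> \<odot>\<^bsub>M\<^esub> (a \<odot>\<^bsub>M\<^esub> y)"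
      using smult_assoc1[of a \<kappa> y] smult_assoc1[of \<kappa> a y] a k1 y by (simp add: mult.commute)
    ultimately have h1: "(\<kappa> \<odot>\<^bsub>M\<^esub> (a \<odot>\<^bsub>M\<^esub> y)) \<ominus>\<^bsub>M\<^esub> (a \<odot>\<^bsub>M\<^esub> g x) \<in> B'" by simp
    have "(a \<odot>\<^bsub>M\<^esub> g x) \<ominus>\<^bsub>M\<^esub> g (a \<odot>\<^bsub>Kfree v r\<^esub> x) \<in> B'"
      using cg_sym[OF P(2) gC[OF ax] agx P(5)[OF a x(1)]] .
    have ay: "a \<odot>\<^bsub>M\<^esub> y \<in> carrier M" using smult_closed[of a y] a y by simp
    then have "(\<kappa> \<odot>\<^bsub>M\<^esub> (a \<odot>\<^bsub>M\<^esub> y)) \<ominus>\<^bsub>M\<^esub> g (a \<odot>\<^bsub>Kfree v r\<^esub> x) \<in> B'"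
      using cg_trans[OF P(2) kyC[OF ay] agx gC[OF ax] h1] \<open>(a \<odot>\<^bsub>M\<^esub> g x) \<ominus>\<^bsub>M\<^esub> g (a \<odot>\<^bsub>Kfree v r\<^esub> x) \<in> B'\<close> by blast
    then have "psi (a \<odot>\<^bsub>M\<^esub> y) = a \<odot>\<^bsub>Kfree v r\<^esub> x" using psiE[OF ay ax] by blast
    then show "psi (a \<odot>\<^bsub>M\<^esub> y) = (\<lambda>i. a * psi y i)" unfolding x_def by simp
  next
    fix y d assume y: "y \<in> carrier M" and p0: "psi y = (\<lambda>i. 0)" and d: "v d < 1"
    have "(\<kappa> \<odot>\<^bsub>M\<^esub> y) \<ominus>\<^bsub>M\<^esub> g (\<lambda>i. 0) \<in> B'" using psiP[OF y] p0 by simp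
    moreover have "(\<lambda>i. 0) \<in> A'" using psiP[OF y] p0 by simp
    ultimately have "\<kappa> \<odot>\<^bsub>M\<^esub> y \<in> B'" using cg_in[OF P(2) kyC[OF y] gC _ roof_g0[OF R]] by metis
    then have "\<And>d. v d < 1 \<Longrightarrow> d \<odot>\<^bsub>M\<^esub> (\<kappa> \<odot>\<^bsub>M\<^esub> y) = \<zero>\<^bsub>M\<^esub>" using P(7) by blast
    then show "d \<odot>\<^bsub>M\<^esub> y = \<zero>\<^bsub>M\<^esub>" using az[OF knz k1 y _ d] by blast
  next
    obtain d0 where d0: "v d0 = 1/2" using exval[of "1/2"] by auto
    show "\<exists>c. c \<noteq> 0 \<and> (\<forall>x\<in>Vr r. (\<forall>i. v (x i) \<le> 1) \<longrightarrow> (\<exists>y\<in>carrier M. psi y = (\<lambda>i. c * x i)))"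
    proof (intro exI[of _ "\<kappa> * d0"] conjI ballI impI)
      show "\<kappa> * d0 \<noteq> 0" using knz d0 by auto
      fix x :: "nat \<Rightarrow> 'k" assume x: "x \<in> Vr r" "\<forall>i. v (x i) \<le> 1"
      then have xC: "x \<in> carrier (Kfree v r)" unfolding Vr_def by simp
      define x' where "x' = d0 \<odot>\<^bsub>Kfree v r\<^esub> x"
      have x'A: "x' \<in> A'" unfolding x'_def using P(6)[OF _ xC] d0 by simp
      have kx'A: "\<kappa> \<odot>\<^bsub>Kfree v r\<^esub> x' \<in> A'" using module.submoduleE(4)[OF Fmod P(1), of \<kappa> x'] k1 x'A by simp
      have kgx: "\<kappa> \<odot>\<^bsub>M\<^esub> g x' \<in> carrier M" using kyC gC x'A by blast
      have "(\<kappa> \<odot>\<^bsub>M\<^esub> g x') \<ominus>\<^bsub>M\<^esub> g (\<kappa> \<odot>\<^bsub>Kfree v r\<^esub> x') \<in> B'"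
        using cg_sym[OF P(2) gC[OF kx'A] kgx P(5)[OF k1 x'A]] .
      then have "psi (g x') = \<kappa> \<odot>\<^bsub>Kfree v r\<^esub> x'" using psiE[OF gC[OF x'A] kx'A] by blast
      then have "psi (g x') = (\<lambda>i. (\<kappa> * d0) * x i)" unfolding x'_def by (simp add: mult.assoc)
      then show "\<exists>y\<in>carrier M. psi y = (\<lambda>i. \<kappa> * d0 * x i)" using gC[OF x'A] by blast
    qed
  qed
qed

end


context setting begin

lemma vaddlt: "v x < 1 \<Longrightarrow> v y < 1 \<Longrightarrow> v (x + y) < 1"
  using vadd[of x y] by simp

lemma final: "almost_isomorphic v (Kfree v r) M"
proof -
  have "\<exists>psi :: 'm \<Rightarrow> nat \<Rightarrow> 'k. (\<forall>y. y \<in> carrier M \<longrightarrow> psi y \<in> carrier (Kfree v r)) \<and>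
    (\<forall>y1 y2. y1 \<in> carrier M \<longrightarrow> y2 \<in> carrier M \<longrightarrow> psi (y1 \<oplus>\<^bsub>M\<^esub> y2) = (\<lambda>i. psi y1 i + psi y2 i)) \<and>
    (\<forall>a y. v a \<le> 1 \<longrightarrow> y \<in> carrier M \<longrightarrow> psi (a \<odot>\<^bsub>M\<^esub> y) = (\<lambda>i. a * psi y i)) \<and>
    (\<forall>y d. y \<in> carrier M \<longrightarrow> psi y = (\<lambda>i. 0) \<longrightarrow> v d < 1 \<longrightarrow> d \<odot>\<^bsub>M\<^esub> y = \<zero>\<^bsub>M\<^esub>) \<and>
    (\<exists>c. c \<noteq> 0 \<and> (\<forall>x\<in>Vr r. (\<forall>i. v (x i) \<le> 1) \<longrightarrow> (\<exists>y\<in>carrier M. psi y = (\<lambda>i. c * x i))))"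
  proof (rule psi_exists)
    fix psi :: "'m \<Rightarrow> nat \<Rightarrow> 'k"
    assume A1: "\<And>y. y \<in> carrier M \<Longrightarrow> psi y \<in> carrier (Kfree v r)"
     and A2: "\<And>y1 y2. y1 \<in> carrier M \<Longrightarrow> y2 \<in> carrier M \<Longrightarrow> psi (y1 \<oplus>\<^bsub>M\<^esub> y2) = (\<lambda>i. psi y1 i + psi y2 i)"
     and A3: "\<And>a y. v a \<le> 1 \<Longrightarrow> y \<in> carrier M \<Longrightarrow> psi (a \<odot>\<^bsub>M\<^esub> y) = (\<lambda>i. a * psi y i)"
     and A4: "\<And>y d. y \<in> carrier M \<Longrightarrow> psi y = (\<lambda>i. 0) \<Longrightarrow> v d < 1 \<Longrightarrow> d \<odot>\<^bsub>M\<^esub> y = \<zero>\<^bsub>M\<^esub>"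
     and A5: "\<exists>c. c \<noteq> 0 \<and> (\<forall>x\<in>Vr r. (\<forall>i. v (x i) \<le> 1) \<longrightarrow> (\<exists>y\<in>carrier M. psi y = (\<lambda>i. c * x i)))"
    show "?thesis"
      apply (rule exI[of _ psi])
      apply (intro conjI allI impI)
      using A1 A2 A3 A4 A5 by simp_all
  qed
  then obtain psi :: "'m \<Rightarrow> nat \<Rightarrow> 'k" where
    PP: "(\<forall>y. y \<in> carrier M \<longrightarrow> psi y \<in> carrier (Kfree v r)) \<and>
    (\<forall>y1 y2. y1 \<in> carrier M \<longrightarrow> y2 \<in> carrier M \<longrightarrow> psi (y1 \<oplus>\<^bsub>M\<^esub> y2) = (\<lambda>i. psi y1 i + psi y2 i)) \<and>
    (\<forall>a y. v a \<le> 1 \<longrightarrow> y \<in> carrier M \<longrightarrow> psi (a \<odot>\<^bsub>M\<^esub> y) = (\<lambda>i. a * psi y i)) \<and>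
    (\<forall>y d. y \<in> carrier M \<longrightarrow> psi y = (\<lambda>i. 0) \<longrightarrow> v d < 1 \<longrightarrow> d \<odot>\<^bsub>M\<^esub> y = \<zero>\<^bsub>M\<^esub>) \<and>
    (\<exists>c. c \<noteq> 0 \<and> (\<forall>x\<in>Vr r. (\<forall>i. v (x i) \<le> 1) \<longrightarrow> (\<exists>y\<in>carrier M. psi y = (\<lambda>i. c * x i))))"
    by (elim exE) (rule that)
  have P1: "\<And>y. y \<in> carrier M \<Longrightarrow> psi y \<in> carrier (Kfree v r)" using PP by blast
  have P2: "\<And>y1 y2. y1 \<in> carrier M \<Longrightarrow> y2 \<in> carrier M \<Longrightarrow> psi (y1 \<oplus>\<^bsub>M\<^esub> y2) = (\<lambda>i. psi y1 i + psi y2 i)"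
    using conjunct1[OF conjunct2[OF PP]] by blast
  have P3: "\<And>a y. v a \<le> 1 \<Longrightarrow> y \<in> carrier M \<Longrightarrow> psi (a \<odot>\<^bsub>M\<^esub> y) = (\<lambda>i. a * psi y i)"
    using conjunct1[OF conjunct2[OF conjunct2[OF PP]]] by blast
  have P4: "\<And>y d. y \<in> carrier M \<Longrightarrow> psi y = (\<lambda>i. 0) \<Longrightarrow> v d < 1 \<Longrightarrow> d \<odot>\<^bsub>M\<^esub> y = \<zero>\<^bsub>M\<^esub>"
    using conjunct1[OF conjunct2[OF conjunct2[OF conjunct2[OF PP]]]] by blast
  have P5: "\<exists>c. c \<noteq> 0 \<and> (\<forall>x\<in>Vr r. (\<forall>i. v (x i) \<le> 1) \<longrightarrow> (\<exists>y\<in>carrier M. psi y = (\<lambda>i. c * x i)))"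
    using conjunct2[OF conjunct2[OF conjunct2[OF conjunct2[OF PP]]]] .
  have psi0: "psi \<zero>\<^bsub>M\<^esub> = (\<lambda>i. 0)"
  proof -
    have "psi (0 \<odot>\<^bsub>M\<^esub> \<zero>\<^bsub>M\<^esub>) = (\<lambda>i. 0 * psi \<zero>\<^bsub>M\<^esub> i)" using P3[of 0 "\<zero>\<^bsub>M\<^esub>"] by simp
    moreover have "0 \<odot>\<^bsub>M\<^esub> \<zero>\<^bsub>M\<^esub> = \<zero>\<^bsub>M\<^esub>" using smult_l_null[of "\<zero>\<^bsub>M\<^esub>"] by simp
    ultimately show ?thesis by simp
  qed
  have psineg: "psi (\<ominus>\<^bsub>M\<^esub> y) = (\<lambda>i. - psi y i)" if y: "y \<in> carrier M" for y
  proof -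
    have "psi (\<ominus>\<^bsub>M\<^esub> y \<oplus>\<^bsub>M\<^esub> y) = (\<lambda>i. psi (\<ominus>\<^bsub>M\<^esub> y) i + psi y i)" using P2[of "\<ominus>\<^bsub>M\<^esub> y" y] y by simp
    moreover have "\<ominus>\<^bsub>M\<^esub> y \<oplus>\<^bsub>M\<^esub> y = \<zero>\<^bsub>M\<^esub>" using y by (simp add: l_neg)
    ultimately have "(\<lambda>i. psi (\<ominus>\<^bsub>M\<^esub> y) i + psi y i) = (\<lambda>i. 0)" using psi0 by simp
    then have "\<And>i. psi (\<ominus>\<^bsub>M\<^esub> y) i + psi y i = 0" by (simp add: fun_eq_iff)
    then show ?thesis by (simp add: fun_eq_iff eq_neg_iff_add_eq_0)
  qed
  have psidiff: "psi (a \<ominus>\<^bsub>M\<^esub> b) = (\<lambda>i. psi a i - psi b i)" if "a \<in> carrier M" "b \<in> carrier M" for a b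
    using P2[of a "\<ominus>\<^bsub>M\<^esub> b"] psineg[of b] that unfolding a_minus_def by simp
  define L where "L = psi ` carrier M"
  obtain c0 where c0: "c0 \<noteq> 0" "\<And>x. x \<in> Vr r \<Longrightarrow> \<forall>i. v (x i) \<le> 1 \<Longrightarrow> \<exists>y\<in>carrier M. psi y = (\<lambda>i. c0 * x i)"
    using P5 by blast
  have lat: "is_lat v r L" unfolding is_lat_def
  proof (intro conjI)
    show "L \<subseteq> Vr r"
    proof
      fix x assume "x \<in> L"
      then obtain y where y: "y \<in> carrier M" "x = psi y" unfolding L_def by blast
      then have "x \<in> carrier (Kfree v r)" using P1[OF y(1)] by simp
      then show "x \<in> Vr r" unfolding Vr_def by simp
    qed
    show "\<forall>x\<in>L. \<forall>y\<in>L. (\<lambda>i. x i + y i) \<in> L"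
    proof (intro ballI)
      fix x y assume "x \<in> L" "y \<in> L"
      then obtain y1 y2 where yy: "y1 \<in> carrier M" "y2 \<in> carrier M" "x = psi y1" "y = psi y2" unfolding L_def by blast
      have "(\<lambda>i. x i + y i) = psi (y1 \<oplus>\<^bsub>M\<^esub> y2)" using P2[OF yy(1,2)] yy(3,4) by simp
      moreover have "y1 \<oplus>\<^bsub>M\<^esub> y2 \<in> carrier M" using yy(1,2) by simp
      ultimately show "(\<lambda>i. x i + y i) \<in> L" unfolding L_def by (rule image_eqI)
    qed
    show "\<forall>a. \<forall>x\<in>L. v a \<le> 1 \<longrightarrow> (\<lambda>i. a * x i) \<in> L"
    proof (intro allI ballI impI)
      fix a x assume "x \<in> L" "v a \<le> 1"
      then obtain y where yy: "y \<in> carrier M" "x = psi y" unfolding L_def by blast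
      have "(\<lambda>i. a * x i) = psi (a \<odot>\<^bsub>M\<^esub> y)" using P3[OF \<open>v a \<le> 1\<close> yy(1)] yy(2) by simp
      moreover have "a \<odot>\<^bsub>M\<^esub> y \<in> carrier M" using smult_closed[of a y] \<open>v a \<le> 1\<close> yy(1) by simp
      ultimately show "(\<lambda>i. a * x i) \<in> L" unfolding L_def by (rule image_eqI)
    qed
    show "\<forall>x\<in>L. \<forall>i. v (x i) \<le> 1"
    proof (intro ballI allI)
      fix x i assume "x \<in> L"
      then obtain y where y: "y \<in> carrier M" "x = psi y" unfolding L_def by blast
      then have "x \<in> carrier (Kfree v r)" using P1[OF y(1)] by simp
      then show "v (x i) \<le> 1" by simp
    qed
    show "\<exists>c. c \<noteq> 0 \<and> (\<forall>x\<in>Vr r. (\<forall>i. v (x i) \<le> 1) \<longrightarrow> (\<lambda>i. c * x i) \<in> L)"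
    proof (intro exI[of _ c0] conjI ballI impI)
      show "c0 \<noteq> 0" by (rule c0(1))
      fix x :: "nat \<Rightarrow> 'k" assume x: "x \<in> Vr r" "\<forall>i. v (x i) \<le> 1"
      obtain y where y: "y \<in> carrier M" "psi y = (\<lambda>i. c0 * x i)" using c0(2)[OF x] by blast
      have "(\<lambda>i. c0 * x i) = psi y" using y(2) by simp
      then show "(\<lambda>i. c0 * x i) \<in> L" unfolding L_def using y(1) by (rule image_eqI)
    qed
  qed
  obtain e where e1: "\<forall>x. comb e r x = (\<lambda>_. 0) \<longrightarrow> (\<forall>i<r. x i = 0)"
    and e2: "\<forall>x. (\<forall>i. v (x i) < 1) \<longrightarrow> comb e r x \<in> L"
    and e3: "\<forall>y\<in>L. \<exists>x\<in>Vr r. (\<forall>i. v (x i) \<le> 1) \<and> comb e r x = y"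
    using lattice[OF lat] by blast
  define A2 where "A2 = {x \<in> carrier (Kfree v r). \<forall>i. v (x i) < 1}"
  define B2 where "B2 = {y \<in> carrier M. psi y = (\<lambda>i. 0)}"
  define g2 where "g2 x = (SOME y. y \<in> carrier M \<and> psi y = comb e r x)" for x
  have gP: "g2 x \<in> carrier M \<and> psi (g2 x) = comb e r x" if "x \<in> A2" for x
  proof -
    have xs: "\<forall>i. v (x i) < 1" using that unfolding A2_def by blast
    have "comb e r x \<in> L" using e2 xs by blast
    then obtain y where "y \<in> carrier M" "comb e r x = psi y" unfolding L_def by blast
    then have "\<exists>y. y \<in> carrier M \<and> psi y = comb e r x" by auto
    then show ?thesis unfolding g2_def by (rule someI_ex)
  qed
  have B2I: "y \<in> B2" if "y \<in> carrier M" "psi y = (\<lambda>i. 0)" for y using that unfolding B2_def by blast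
  have roof: "almost_roof v (Kfree v r) M A2 B2 g2" unfolding almost_roof_def
  proof (intro conjI)
    show "submodule A2 (Kint v) (Kfree v r)"
    proof (rule module.submoduleI[OF Fmod])
      show "A2 \<subseteq> carrier (Kfree v r)" unfolding A2_def by blast
      show "\<zero>\<^bsub>Kfree v r\<^esub> \<in> A2" unfolding A2_def by simp
      fix a assume a: "a \<in> A2"
      then show "\<ominus>\<^bsub>Kfree v r\<^esub> a \<in> A2" unfolding A2_def using Kfree_minus[of a r] by simp
    next
      fix a b assume "a \<in> A2" "b \<in> A2"
      then show "a \<oplus>\<^bsub>Kfree v r\<^esub> b \<in> A2" unfolding A2_def using vadd1 vaddlt by auto
    next
      fix a x assume "a \<in> carrier (Kint v)" "x \<in> A2"
      then show "a \<odot>\<^bsub>Kfree v r\<^esub> x \<in> A2" unfolding A2_def using vlt1' by (auto intro: less_imp_le)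
    qed
    show "almost_zero_sq v (Kfree v r) (carrier (Kfree v r)) A2"
      unfolding almost_zero_sq_def A2_def Kmax_def using vlt1 by (auto intro: less_imp_le)
    show "submodule B2 (Kint v) M"
    proof (rule submoduleI)
      show "B2 \<subseteq> carrier M" unfolding B2_def by blast
      show "\<zero>\<^bsub>M\<^esub> \<in> B2" using psi0 B2I by simp
      fix a assume a: "a \<in> B2"
      then show "\<ominus>\<^bsub>M\<^esub> a \<in> B2" unfolding B2_def using psineg by simp
    next
      fix a b assume "a \<in> B2" "b \<in> B2"
      then show "a \<oplus>\<^bsub>M\<^esub> b \<in> B2" unfolding B2_def using P2 by simp
    next
      fix a x assume "a \<in> carrier (Kint v)" "x \<in> B2"
      then show "a \<odot>\<^bsub>M\<^esub> x \<in> B2" unfolding B2_def using P3 smult_closed by simp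
    qed
    show "almost_zero_sq v M B2 {\<zero>\<^bsub>M\<^esub>}"
      unfolding almost_zero_sq_def B2_def Kmax_def using P4 by blast
    show "g2 \<in> A2 \<rightarrow> carrier M" using gP by blast
    show "\<forall>x\<in>A2. \<forall>y\<in>A2. g2 (x \<oplus>\<^bsub>Kfree v r\<^esub> y) \<ominus>\<^bsub>M\<^esub> (g2 x \<oplus>\<^bsub>M\<^esub> g2 y) \<in> B2"
    proof (intro ballI)
      fix x y assume x: "x \<in> A2" and y: "y \<in> A2"
      have xy: "x \<oplus>\<^bsub>Kfree v r\<^esub> y \<in> A2" using x y unfolding A2_def using vadd1 vaddlt by auto
      have c1: "g2 (x \<oplus>\<^bsub>Kfree v r\<^esub> y) \<in> carrier M" and c2: "g2 x \<oplus>\<^bsub>M\<^esub> g2 y \<in> carrier M"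
        using gP[OF xy] gP[OF x] gP[OF y] by auto
      have "psi (g2 (x \<oplus>\<^bsub>Kfree v r\<^esub> y) \<ominus>\<^bsub>M\<^esub> (g2 x \<oplus>\<^bsub>M\<^esub> g2 y)) = (\<lambda>i. 0)"
        using psidiff[OF c1 c2] P2[of "g2 x" "g2 y"] gP[OF xy] gP[OF x] gP[OF y]
        by (simp add: comb_add)
      then show "g2 (x \<oplus>\<^bsub>Kfree v r\<^esub> y) \<ominus>\<^bsub>M\<^esub> (g2 x \<oplus>\<^bsub>M\<^esub> g2 y) \<in> B2" using B2I c1 c2 by simp
    qed
    show "\<forall>a\<in>carrier (Kint v). \<forall>x\<in>A2. g2 (a \<odot>\<^bsub>Kfree v r\<^esub> x) \<ominus>\<^bsub>M\<^esub> (a \<odot>\<^bsub>M\<^esub> g2 x) \<in> B2"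
    proof (intro ballI)
      fix a x assume a: "a \<in> carrier (Kint v)" and x: "x \<in> A2"
      have ax: "a \<odot>\<^bsub>Kfree v r\<^esub> x \<in> A2" using a x vlt1' unfolding A2_def by (auto intro: less_imp_le)
      have c1: "g2 (a \<odot>\<^bsub>Kfree v r\<^esub> x) \<in> carrier M" and c2: "a \<odot>\<^bsub>M\<^esub> g2 x \<in> carrier M"
        using gP[OF ax] gP[OF x] smult_closed[of a "g2 x"] a by auto
      have "psi (g2 (a \<odot>\<^bsub>Kfree v r\<^esub> x) \<ominus>\<^bsub>M\<^esub> (a \<odot>\<^bsub>M\<^esub> g2 x)) = (\<lambda>i. 0)"
        using psidiff[OF c1 c2] P3[of a "g2 x"] gP[OF ax] gP[OF x] a
        by (simp add: comb_scale)
      then show "g2 (a \<odot>\<^bsub>Kfree v r\<^esub> x) \<ominus>\<^bsub>M\<^esub> (a \<odot>\<^bsub>M\<^esub> g2 x) \<in> B2" using B2I c1 c2 by simp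
    qed
  qed
  have ker: "almost_zero_sq v (Kfree v r) (roof_kernel M A2 B2 g2) {\<zero>\<^bsub>Kfree v r\<^esub>}"
    unfolding almost_zero_sq_def
  proof (intro ballI)
    fix d x assume d: "d \<in> Kmax v" and x: "x \<in> roof_kernel M A2 B2 g2"
    then have xA: "x \<in> A2" and "g2 x \<in> B2" unfolding roof_kernel_def by auto
    then have "comb e r x = (\<lambda>i. 0)" using gP[OF xA] unfolding B2_def by simp
    then have "\<forall>i<r. x i = 0" using e1 by blast
    moreover have "\<forall>i\<ge>r. x i = 0" using xA unfolding A2_def by simp
    ultimately have "x = (\<lambda>i. 0)" by (metis not_le)
    then show "d \<odot>\<^bsub>Kfree v r\<^esub> x \<in> {\<zero>\<^bsub>Kfree v r\<^esub>}" by simp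
  qed
  have cok: "almost_zero_sq v M (carrier M) (roof_image M A2 B2 g2)"
    unfolding almost_zero_sq_def
  proof (intro ballI)
    fix d y assume d: "d \<in> Kmax v" and y: "y \<in> carrier M"
    have vd: "v d < 1" using d unfolding Kmax_def by simp
    have dy: "d \<odot>\<^bsub>M\<^esub> y \<in> carrier M" using smult_closed[of d y] vd y by simp
    have "psi y \<in> L" unfolding L_def using y by blast
    then obtain x0 where x0: "x0 \<in> Vr r" "\<forall>i. v (x0 i) \<le> 1" "comb e r x0 = psi y" using e3 by blast
    define x where "x = (\<lambda>i. d * x0 i)"
    have xA: "x \<in> A2" unfolding x_def A2_def using x0(1,2) vlt1[OF vd] unfolding Vr_def
      by (auto intro: less_imp_le)
    have gx: "g2 x \<in> carrier M" using gP[OF xA] by simp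
    have "psi (d \<odot>\<^bsub>M\<^esub> y \<ominus>\<^bsub>M\<^esub> g2 x) = (\<lambda>i. 0)"
      using psidiff[OF dy gx] P3[of d y] vd y gP[OF xA] x0(3) unfolding x_def
      by (simp add: comb_scale)
    then have "d \<odot>\<^bsub>M\<^esub> y \<ominus>\<^bsub>M\<^esub> g2 x \<in> B2" using B2I dy gx by simp
    then show "d \<odot>\<^bsub>M\<^esub> y \<in> roof_image M A2 B2 g2" unfolding roof_image_def using dy xA by blast
  qed
  show ?thesis unfolding almost_isomorphic_def using roof ker cok by blast
qed

end

theorem theorem5p3:
  fixes v :: "'k::field \<Rightarrow> real" and M :: "('k, 'm) module"
  assumes "nonarch_field v"
    and "spherically_complete v"
    and "value_group v = {0<..}"
    and "module (Kint v) M"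
    and "almost_finite_free v M r"
  shows "\<exists>n. almost_isomorphic v (Kfree v n) M"
proof -
  have na: "nonarch_abs v" using assms(1) unfolding nonarch_field_def by blast
  interpret S: setting v M r
    by (rule setting.intro[OF nav.intro[OF na assms(2) assms(3)] assms(4) setting_axioms.intro[OF assms(5)]])
  show ?thesis using S.final by blast
qed

end
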